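(* Let $n,s\in\mathbb{N}_0$ and $P_n\in M_n$. Then for all $x\in\mathbb{R}^d$: if $s$ is even, $H_{s,\mu,P_n}(x)=2^s\,(\tfrac{s}{2})!\,L^{\frac{\mu}{2}+n-1}_{s/2}(|x|^2)\,P_n(x)$; if $s$ is odd, $H_{s,\mu,P_n}(x)=-2^s\,(\tfrac{s-1}{2})!\;x\,L^{\frac{\mu}{2}+n}_{(s-1)/2}(|x|^2)\,P_n(x)$, where $L^\alpha_m(y)=\sum_{j=0}^m\frac{\Gamma(m+\alpha+1)}{j!\,(m-j)!\,\Gamma(j+\alpha+1)}(-y)^j$ is the generalized Laguerre polynomial.
   Context: Let $d\ge 2$. $\mathbb{R}_{0,d}$ is the real Clifford algebra generated by $e_1,\dots,e_d$ with $e_ie_j+e_je_i=-2\delta_{ij}$; vectors $x$ are identified with $\sum_ix_ie_i$, so $x^2=-|x|^2$. $R$ is a root system with reflection group $W$, positive subsystem $R_+$, $\kappa:R\to[0,\infty)$ a $W$-invariant multiplicity function with $\gamma_\kappa=\sum_{\alpha\in R_+}\kappa(\alpha)>0$, $\mu=2\gamma_\kappa+d$. Dunkl operators $T_if(x)=\partial_{x_i}f(x)+\sum_{\alpha\in R_+}\kappa(\alpha)\frac{f(x)-f(\sigma_\alpha x)}{\langle\alpha,x\rangle}\alpha_i$; Dunkl–Dirac operator $D_h=\sum_ie_iT_i$. $M_n$: $\mathbb{C}\otimes\mathbb{R}_{0,d}$-valued homogeneous polynomials of degree $n$ with $D_hP=0$. $D_+f=D_hf-2xf$, and $H_{s,\mu,P_n}=(D_+)^sP_n$.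 *)

theory Defs
  imports "HOL-Analysis.Analysis"
begin

text \<open>Vectors of R^d are functions nat => real whose components i >= d vanish.
 Elements of the complexified Clifford algebra C (x) R_{0,d} are coefficient maps
 on blades e_A (A a subset of {0..<d}), i.e. functions nat set => complex.\<close>

type_synonym vec = "nat \<Rightarrow> real"
type_synonym cl = "nat set \<Rightarrow> complex"

definition inner_d :: "nat \<Rightarrow> vec \<Rightarrow> vec \<Rightarrow> real" where
  "inner_d d a x = (\<Sum>i<d. a i * x i)"

definition normsq_d :: "nat \<Rightarrow> vec \<Rightarrow> real" where
  "normsq_d d x = inner_d d x x"

definition refl_d :: "nat \<Rightarrow> vec \<Rightarrow> vec \<Rightarrow> vec" where
  "refl_d d \<alpha> x = (\<lambda>i. x i - 2 * inner_d d \<alpha> x / inner_d d \<alpha> \<alpha> * \<alpha> i)"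

definition root_system :: "nat \<Rightarrow> vec set \<Rightarrow> bool" where
  "root_system d R \<longleftrightarrow> finite R
     \<and> (\<forall>\<alpha>\<in>R. (\<forall>i\<ge>d. \<alpha> i = 0) \<and> \<alpha> \<noteq> (\<lambda>_. 0))
     \<and> (\<forall>\<alpha>\<in>R. \<forall>c::real. (\<lambda>i. c * \<alpha> i) \<in> R \<longleftrightarrow> c = 1 \<or> c = -1)
     \<and> (\<forall>\<alpha>\<in>R. \<forall>\<beta>\<in>R. refl_d d \<alpha> \<beta> \<in> R)"

definition positive_subsystem :: "nat \<Rightarrow> vec set \<Rightarrow> vec set \<Rightarrow> bool" where
  "positive_subsystem d R Rp \<longleftrightarrow>
     (\<exists>\<beta>. (\<forall>\<alpha>\<in>R. inner_d d \<alpha> \<beta> \<noteq> 0) \<and> Rp = {\<alpha>\<in>R. inner_d d \<alpha> \<beta> > 0})"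

inductive_set refl_group :: "nat \<Rightarrow> vec set \<Rightarrow> (vec \<Rightarrow> vec) set" for d R where
  refl_group_id: "id \<in> refl_group d R"
| refl_group_step: "w \<in> refl_group d R \<Longrightarrow> \<alpha> \<in> R \<Longrightarrow> refl_d d \<alpha> \<circ> w \<in> refl_group d R"

definition multiplicity :: "nat \<Rightarrow> vec set \<Rightarrow> (vec \<Rightarrow> real) \<Rightarrow> bool" where
  "multiplicity d R \<kappa> \<longleftrightarrow> (\<forall>\<alpha>\<in>R. \<kappa> \<alpha> \<ge> 0) \<and> (\<forall>w\<in>refl_group d R. \<forall>\<alpha>\<in>R. \<kappa> (w \<alpha>) = \<kappa> \<alpha>)"

text \<open>Clifford algebra: e_A e_B = (-1)^(inversions + |A inter B|) e_(A symdiff B).\<close>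
definition cl_sign :: "nat set \<Rightarrow> nat set \<Rightarrow> complex" where
  "cl_sign A B = (-1) ^ (card {(a, b). a \<in> A \<and> b \<in> B \<and> b < a} + card (A \<inter> B))"

definition cl_mult :: "nat \<Rightarrow> cl \<Rightarrow> cl \<Rightarrow> cl" where
  "cl_mult d a b = (\<lambda>C. \<Sum>A\<in>Pow {..<d}. \<Sum>B\<in>Pow {..<d}.
      if (A - B) \<union> (B - A) = C then cl_sign A B * a A * b B else 0)"

definition cl_scale :: "real \<Rightarrow> cl \<Rightarrow> cl" where
  "cl_scale c a = (\<lambda>A. complex_of_real c * a A)"

definition cl_gen :: "nat \<Rightarrow> cl" where
  "cl_gen i = (\<lambda>A. if A = {i} then 1 else 0)"

definition cl_vec :: "nat \<Rightarrow> vec \<Rightarrow> cl" where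
  "cl_vec d x = (\<lambda>A. \<Sum>i<d. complex_of_real (x i) * cl_gen i A)"

definition partial_d :: "nat \<Rightarrow> (vec \<Rightarrow> cl) \<Rightarrow> vec \<Rightarrow> cl" where
  "partial_d i f x = (\<lambda>A. vector_derivative (\<lambda>t::real. f (x(i := x i + t)) A) (at 0))"

definition diff_quot :: "nat \<Rightarrow> (vec \<Rightarrow> cl) \<Rightarrow> vec \<Rightarrow> vec \<Rightarrow> cl" where
  "diff_quot d f \<alpha> x =
     (let q = (\<lambda>y. cl_scale (1 / inner_d d \<alpha> y) (\<lambda>A. f y A - f (refl_d d \<alpha> y) A))
      in if inner_d d \<alpha> x \<noteq> 0 then q x
         else (\<lambda>A. Lim (at x within {y. inner_d d \<alpha> y \<noteq> 0}) (\<lambda>y. q y A)))"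

definition dunkl :: "nat \<Rightarrow> vec set \<Rightarrow> (vec \<Rightarrow> real) \<Rightarrow> nat \<Rightarrow> (vec \<Rightarrow> cl) \<Rightarrow> vec \<Rightarrow> cl" where
  "dunkl d Rp \<kappa> i f x = (\<lambda>A. partial_d i f x A
      + (\<Sum>\<alpha>\<in>Rp. complex_of_real (\<kappa> \<alpha> * \<alpha> i) * diff_quot d f \<alpha> x A))"

definition dunkl_dirac :: "nat \<Rightarrow> vec set \<Rightarrow> (vec \<Rightarrow> real) \<Rightarrow> (vec \<Rightarrow> cl) \<Rightarrow> vec \<Rightarrow> cl" where
  "dunkl_dirac d Rp \<kappa> f x = (\<lambda>A. \<Sum>i<d. cl_mult d (cl_gen i) (dunkl d Rp \<kappa> i f x) A)"

definition D_plus :: "nat \<Rightarrow> vec set \<Rightarrow> (vec \<Rightarrow> real) \<Rightarrow> (vec \<Rightarrow> cl) \<Rightarrow> vec \<Rightarrow> cl" where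
  "D_plus d Rp \<kappa> f x = (\<lambda>A. dunkl_dirac d Rp \<kappa> f x A - 2 * cl_mult d (cl_vec d x) (f x) A)"

definition H_fun :: "nat \<Rightarrow> vec set \<Rightarrow> (vec \<Rightarrow> real) \<Rightarrow> nat \<Rightarrow> (vec \<Rightarrow> cl) \<Rightarrow> vec \<Rightarrow> cl" where
  "H_fun d Rp \<kappa> s P = (D_plus d Rp \<kappa> ^^ s) P"

definition multi_idx :: "nat \<Rightarrow> nat \<Rightarrow> (nat \<Rightarrow> nat) set" where
  "multi_idx d n = {\<beta>. (\<forall>i\<ge>d. \<beta> i = 0) \<and> (\<Sum>i<d. \<beta> i) = n}"

definition hom_poly :: "nat \<Rightarrow> nat \<Rightarrow> (vec \<Rightarrow> cl) \<Rightarrow> bool" where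
  "hom_poly d n P \<longleftrightarrow> (\<exists>c :: (nat \<Rightarrow> nat) \<Rightarrow> cl.
      (\<forall>\<beta> A. \<not> A \<subseteq> {..<d} \<longrightarrow> c \<beta> A = 0) \<and>
      P = (\<lambda>x A. \<Sum>\<beta>\<in>multi_idx d n. c \<beta> A * complex_of_real (\<Prod>i<d. x i ^ \<beta> i)))"

definition monogenic :: "nat \<Rightarrow> vec set \<Rightarrow> (vec \<Rightarrow> real) \<Rightarrow> nat \<Rightarrow> (vec \<Rightarrow> cl) \<Rightarrow> bool" where
  "monogenic d Rp \<kappa> n P \<longleftrightarrow> hom_poly d n P \<and>
     (\<forall>x. (\<forall>i\<ge>d. x i = 0) \<longrightarrow> dunkl_dirac d Rp \<kappa> P x = (\<lambda>_. 0))"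

definition laguerre :: "real \<Rightarrow> nat \<Rightarrow> real \<Rightarrow> real" where
  "laguerre a m y = (\<Sum>j\<le>m. Gamma (real m + a + 1)
       / (fact j * fact (m - j) * Gamma (real j + a + 1)) * (- y) ^ j)"

end

theory Submission
  imports Defs "HOL-Computational_Algebra.Polynomial"
begin


definition suppc :: "nat \<Rightarrow> cl \<Rightarrow> bool" where
  "suppc d b \<longleftrightarrow> (\<forall>A. \<not> A \<subseteq> {..<d} \<longrightarrow> b A = 0)"

definition flp :: "nat set \<Rightarrow> nat \<Rightarrow> nat set" where
  "flp X j = (if j \<in> X then X - {j} else insert j X)"

definition sg :: "nat \<Rightarrow> nat set \<Rightarrow> complex" where
  "sg i B = (-1) ^ (card {b\<in>B. b < i} + (if i \<in> B then 1 else 0))"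

lemma flip_flip[simp]: "flp (flp X j) j = X"
  unfolding flp_def by auto

lemma flip_comm: "flp (flp X i) j = flp (flp X j) i"
  unfolding flp_def by auto

lemma flip_sub: "X \<subseteq> {..<d} \<Longrightarrow> j < d \<Longrightarrow> flp X j \<subseteq> {..<d}"
  unfolding flp_def by auto

lemma symd_single: "(({i}::nat set) - B) \<union> (B - {i}) = C \<longleftrightarrow> B = flp C i"
  unfolding flp_def by auto

lemma cl_sign_single: "finite B \<Longrightarrow> cl_sign {i} B = sg i B"
proof -
  assume fB: "finite B"
  have "{(a, b). a \<in> {i} \<and> b \<in> B \<and> b < a} = Pair i ` {b\<in>B. b < i}" by auto
  hence "card {(a, b). a \<in> {i} \<and> b \<in> B \<and> b < a} = card {b\<in>B. b < i}"
    by (simp add: card_image inj_on_def)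
  moreover have "card ({i} \<inter> B) = (if i \<in> B then 1 else 0)" by auto
  ultimately show ?thesis unfolding cl_sign_def sg_def by simp
qed

lemma E_explicit:
  assumes "i < d"
  shows "cl_mult d (cl_gen i) b C = (if C \<subseteq> {..<d} then sg i (flp C i) * b (flp C i) else 0)"
proof -
  have "cl_mult d (cl_gen i) b C = (\<Sum>A\<in>Pow {..<d}. if A = {i} then
      (\<Sum>B\<in>Pow {..<d}. if (A - B) \<union> (B - A) = C then cl_sign A B * b B else 0) else 0)"
    unfolding cl_mult_def cl_gen_def
    apply (intro sum.cong refl)
    subgoal for A by (cases "A = {i}") (simp_all cong: if_cong)
    done
  also have "\<dots> = (\<Sum>B\<in>Pow {..<d}. if ({i} - B) \<union> (B - {i}) = C then cl_sign {i} B * b B else 0)"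
    using assms by (simp add: sum.delta)
  also have "\<dots> = (\<Sum>B\<in>Pow {..<d}. if B = flp C i then sg i B * b B else 0)"
    by (rule sum.cong) (auto simp: symd_single cl_sign_single finite_subset[of _ "{..<d}"])
  also have "\<dots> = (if C \<subseteq> {..<d} then sg i (flp C i) * b (flp C i) else 0)"
  proof -
    have "flp C i \<subseteq> {..<d} \<longleftrightarrow> C \<subseteq> {..<d}" using assms unfolding flp_def by auto
    thus ?thesis by (simp add: sum.delta')
  qed
  finally show ?thesis .
qed

lemma sg_flip_self: "sg i (flp X i) = - sg i X"
proof -
  have "{b \<in> flp X i. b < i} = {b \<in> X. b < i}" unfolding flp_def by auto
  moreover have "(i \<in> flp X i) = (i \<notin> X)" unfolding flp_def by auto
  ultimately show ?thesis unfolding sg_def by auto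
qed

lemma sg_sq: "sg i X * sg i X = 1"
  unfolding sg_def by (simp add: power_add[symmetric] mult_2[symmetric] power_mult)

lemma sg_flip_less:
  assumes "j < i" "finite X"
  shows "sg i (flp X j) = - sg i X"
proof (cases "j \<in> X")
  case True
  have "{b \<in> X. b < i} = insert j {b \<in> X - {j}. b < i}" using True assms by auto
  hence "card {b \<in> X. b < i} = Suc (card {b \<in> X - {j}. b < i})" using assms by simp
  thus ?thesis using True assms unfolding sg_def flp_def by auto
next
  case False
  have "{b \<in> insert j X. b < i} = insert j {b \<in> X. b < i}" using False assms by auto
  hence "card {b \<in> insert j X. b < i} = Suc (card {b \<in> X. b < i})" using assms False by simp
  thus ?thesis using False assms unfolding sg_def flp_def by auto
qed

lemma sg_flip_greater:
  assumes "i < j"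
  shows "sg i (flp X j) = sg i X"
proof -
  have "{b \<in> flp X j. b < i} = {b \<in> X. b < i}" using assms unfolding flp_def by auto
  moreover have "(i \<in> flp X j) = (i \<in> X)" using assms unfolding flp_def by auto
  ultimately show ?thesis unfolding sg_def by simp
qed

abbreviation E :: "nat \<Rightarrow> nat \<Rightarrow> cl \<Rightarrow> cl" where
  "E d i b \<equiv> cl_mult d (cl_gen i) b"

lemma E_E_same:
  assumes "i < d" "suppc d b"
  shows "E d i (E d i b) = (\<lambda>C. - b C)"
proof
  fix C
  show "E d i (E d i b) C = - b C"
  proof (cases "C \<subseteq> {..<d}")
    case True
    then have "flp C i \<subseteq> {..<d}" using assms flip_sub by auto
    then show ?thesis using True assms by (simp add: E_explicit sg_flip_self sg_sq)
  next
    case False thus ?thesis using assms by (simp add: E_explicit suppc_def)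
  qed
qed

lemma E_anti_less:
  assumes "j < i" "i < d"
  shows "E d i (E d j b) C + E d j (E d i b) C = 0"
proof (cases "C \<subseteq> {..<d}")
  case True
  have s1: "flp C i \<subseteq> {..<d}" "flp C j \<subseteq> {..<d}" using True assms flip_sub by auto
  have fin: "finite (flp C i)" "finite (flp C j)" using s1 finite_subset by auto
  have "sg j (flp (flp C i) j) = sg j (flp C j)"
    using assms by (subst flip_comm) (simp add: sg_flip_greater)
  moreover have "sg i (flp (flp C j) i) = - sg i (flp C i)"
    using assms fin by (simp add: flip_comm[of C j i] sg_flip_less)
  ultimately show ?thesis using True s1 assms
    by (simp add: E_explicit flip_comm[of C j i])
next
  case False thus ?thesis using assms by (simp add: E_explicit)
qed

lemma E_anti:
  assumes "i < d" "j < d" "suppc d b"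
  shows "E d i (E d j b) C + E d j (E d i b) C = (if i = j then - 2 * b C else 0)"
proof -
  consider "i = j" | "j < i" | "i < j" by linarith
  thus ?thesis
  proof cases
    case 1 thus ?thesis using E_E_same[OF assms(1,3)] by simp
  next
    case 2 thus ?thesis using E_anti_less[OF 2 assms(1)] by simp
  next
    case 3 thus ?thesis using E_anti_less[OF 3 assms(2), of b C] by (simp add: add.commute)
  qed
qed


definition cw :: "nat set \<Rightarrow> nat set \<Rightarrow> nat set \<Rightarrow> complex" where
  "cw A B C = (if (A - B) \<union> (B - A) = C then cl_sign A B else 0)"

lemma cl_mult_alt: "cl_mult d a b C = (\<Sum>A\<in>Pow {..<d}. \<Sum>B\<in>Pow {..<d}. cw A B C * a A * b B)"
  unfolding cl_mult_def cw_def by (intro sum.cong refl) auto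

lemma cl_mult_add2: "cl_mult d a (\<lambda>C. b C + c C) C' = cl_mult d a b C' + cl_mult d a c C'"
  unfolding cl_mult_alt by (simp add: distrib_left sum.distrib)

lemma cl_mult_diff2: "cl_mult d a (\<lambda>C. b C - c C) C' = cl_mult d a b C' - cl_mult d a c C'"
  unfolding cl_mult_alt by (simp add: right_diff_distrib sum_subtractf)

lemma cl_mult_scale2: "cl_mult d a (\<lambda>C. k * b C) C' = k * cl_mult d a b C'"
  unfolding cl_mult_alt sum_distrib_left by (intro sum.cong refl) (simp add: mult_ac)

lemma cl_mult_zero2: "cl_mult d a (\<lambda>C. 0) C' = 0"
  unfolding cl_mult_alt by simp

lemma swap3: "(\<Sum>A\<in>X. \<Sum>B\<in>Y. \<Sum>j\<in>J. g A B j) = (\<Sum>j\<in>J. \<Sum>A\<in>X. \<Sum>B\<in>Y. (g A B j :: complex))"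
proof -
  have "(\<Sum>A\<in>X. \<Sum>B\<in>Y. \<Sum>j\<in>J. g A B j) = (\<Sum>A\<in>X. \<Sum>j\<in>J. \<Sum>B\<in>Y. g A B j)"
    by (rule sum.cong[OF refl], rule sum.swap)
  also have "\<dots> = (\<Sum>j\<in>J. \<Sum>A\<in>X. \<Sum>B\<in>Y. g A B j)" by (rule sum.swap)
  finally show ?thesis .
qed

lemma cl_mult_sum2: "cl_mult d a (\<lambda>C. \<Sum>j\<in>J. f j C) C' = (\<Sum>j\<in>J. cl_mult d a (f j) C')"
  unfolding cl_mult_alt sum_distrib_left by (rule swap3)

lemma cl_mult_sum1: "cl_mult d (\<lambda>C. \<Sum>j\<in>J. f j C) b C' = (\<Sum>j\<in>J. cl_mult d (f j) b C')"
  unfolding cl_mult_alt sum_distrib_left sum_distrib_right mult.assoc by (rule swap3)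

lemma cl_mult_scale1: "cl_mult d (\<lambda>C. k * a C) b C' = k * cl_mult d a b C'"
  unfolding cl_mult_alt sum_distrib_left by (intro sum.cong refl) (simp add: mult_ac)

lemma cl_mult_add1: "cl_mult d (\<lambda>C. a C + a' C) b C' = cl_mult d a b C' + cl_mult d a' b C'"
  unfolding cl_mult_alt by (simp add: distrib_left distrib_right sum.distrib)

lemma cl_mult_cong2: "(\<And>B. B \<subseteq> {..<d} \<Longrightarrow> b B = b' B) \<Longrightarrow> cl_mult d a b = cl_mult d a b'"
  unfolding cl_mult_alt by (intro ext sum.cong refl) auto

lemma supp_cl_mult: "suppc d (cl_mult d a b)"
  unfolding suppc_def cl_mult_def
  by (auto intro!: sum.neutral)

lemma cl_vec_mult: "cl_mult d (cl_vec d u) b C = (\<Sum>i<d. complex_of_real (u i) * E d i b C)"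
  unfolding cl_vec_def by (simp add: cl_mult_sum1 cl_mult_scale1)

lemma cl_vec_mult_fun: "cl_mult d (cl_vec d u) b = (\<lambda>C. \<Sum>i<d. complex_of_real (u i) * E d i b C)"
  by (rule ext) (rule cl_vec_mult)

lemma supp_scale: "suppc d b \<Longrightarrow> suppc d (\<lambda>C. k * b C)" unfolding suppc_def by auto
lemma supp_add: "suppc d b \<Longrightarrow> suppc d c \<Longrightarrow> suppc d (\<lambda>C. b C + c C)" unfolding suppc_def by auto

lemma E_vm:
  assumes "i < d" "suppc d c"
  shows "E d i (cl_mult d (cl_vec d y) c) C
     = - cl_mult d (cl_vec d y) (E d i c) C - 2 * complex_of_real (y i) * c C"
proof -
  have "E d i (cl_mult d (cl_vec d y) c) C = (\<Sum>j<d. complex_of_real (y j) * E d i (E d j c) C)"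
    by (subst cl_vec_mult_fun) (simp add: cl_mult_sum2 cl_mult_scale2)
  also have "\<dots> = (\<Sum>j<d. complex_of_real (y j) * ((if i = j then - 2 * c C else 0) - E d j (E d i c) C))"
    using E_anti[OF assms(1) _ assms(2)] by (intro sum.cong refl) (simp add: eq_diff_eq)
  also have "\<dots> = (\<Sum>j<d. complex_of_real (y j) * (if i = j then - 2 * c C else 0))
       - (\<Sum>j<d. complex_of_real (y j) * E d j (E d i c) C)"
    by (simp add: right_diff_distrib sum_subtractf)
  also have "(\<Sum>j<d. complex_of_real (y j) * (if i = j then - 2 * c C else 0)) = - 2 * complex_of_real (y i) * c C"
    using assms(1) by (simp add: if_distrib[of "\<lambda>x. _ * x"] sum.delta cong: if_cong)
  finally show ?thesis by (simp only: cl_vec_mult[of d y "E d i c" C]) simp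
qed

lemma vm_vm:
  assumes "suppc d b"
  shows "cl_mult d (cl_vec d u) (cl_mult d (cl_vec d u) b) C = - complex_of_real (normsq_d d u) * b C"
proof -
  define L where "L = cl_mult d (cl_vec d u) (cl_mult d (cl_vec d u) b) C"
  define X where "X i = cl_mult d (cl_vec d u) (E d i b) C" for i
  have "L = (\<Sum>i<d. complex_of_real (u i) * E d i (cl_mult d (cl_vec d u) b) C)"
    unfolding L_def by (rule cl_vec_mult)
  also have "\<dots> = (\<Sum>i<d. complex_of_real (u i) * (- X i - 2 * complex_of_real (u i) * b C))"
    unfolding X_def using E_vm assms by (intro sum.cong refl) simp
  also have "\<dots> = (\<Sum>i<d. - (complex_of_real (u i) * X i) - complex_of_real (u i * u i) * (2 * b C))"
    by (intro sum.cong refl) (simp add: field_simps)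
  also have "\<dots> = - (\<Sum>i<d. complex_of_real (u i) * X i) - (\<Sum>i<d. complex_of_real (u i * u i)) * (2 * b C)"
    by (simp only: sum_subtractf sum_negf sum_distrib_right)
  also have "(\<Sum>i<d. complex_of_real (u i) * X i) = L"
  proof -
    have "(\<Sum>i<d. complex_of_real (u i) * X i) = (\<Sum>i<d. \<Sum>j<d. complex_of_real (u i) * (complex_of_real (u j) * E d j (E d i b) C))"
      unfolding X_def cl_vec_mult[of d u] sum_distrib_left by (simp add: mult.assoc)
    also have "\<dots> = (\<Sum>j<d. \<Sum>i<d. complex_of_real (u j) * (complex_of_real (u i) * E d j (E d i b) C))"
      by (subst sum.swap) (simp add: mult.left_commute)
    also have "\<dots> = (\<Sum>j<d. complex_of_real (u j) * E d j (cl_mult d (cl_vec d u) b) C)"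
      by (simp only: cl_vec_mult_fun[of d u b] cl_mult_sum2 cl_mult_scale2 sum_distrib_left)
    finally show ?thesis unfolding L_def cl_vec_mult[of d u "cl_mult d (cl_vec d u) b"] .
  qed
  finally have "L = - L - (\<Sum>i<d. complex_of_real (u i * u i)) * (2 * b C)" .
  hence "L = - (\<Sum>i<d. complex_of_real (u i * u i)) * b C"
    by algebra
  moreover have "complex_of_real (normsq_d d u) = (\<Sum>i<d. complex_of_real (u i * u i))"
    unfolding normsq_d_def inner_d_def by simp
  ultimately show ?thesis unfolding L_def by simp
qed


definition cc :: "nat \<Rightarrow> vec \<Rightarrow> vec \<Rightarrow> real" where
  "cc d \<alpha> z = 2 * inner_d d \<alpha> z / inner_d d \<alpha> \<alpha>"

lemma refl_alt: "refl_d d \<alpha> z i = z i - cc d \<alpha> z * \<alpha> i"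
  unfolding refl_d_def cc_def by simp

lemma inner_lin: "inner_d d a (\<lambda>i. z i - c * w i) = inner_d d a z - c * inner_d d a w"
proof -
  have "inner_d d a (\<lambda>i. z i - c * w i) = (\<Sum>i<d. a i * z i - c * (a i * w i))"
    unfolding inner_d_def by (intro sum.cong refl) (simp add: algebra_simps)
  also have "\<dots> = inner_d d a z - c * inner_d d a w"
    unfolding inner_d_def by (simp add: sum_subtractf sum_distrib_left)
  finally show ?thesis .
qed

lemma inner_comm: "inner_d d a b = inner_d d b a"
  unfolding inner_d_def by (simp add: mult.commute)

lemma inner_pos:
  assumes "\<forall>i\<ge>d. \<alpha> i = 0" "\<alpha> \<noteq> (\<lambda>_. 0)"
  shows "inner_d d \<alpha> \<alpha> > 0"
proof -
  obtain j where j: "\<alpha> j \<noteq> 0" using assms(2) by auto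
  hence jd: "j < d" using assms(1) by (meson not_le)
  have "inner_d d \<alpha> \<alpha> = (\<Sum>i<d. \<alpha> i * \<alpha> i)" unfolding inner_d_def ..
  also have "\<dots> \<ge> \<alpha> j * \<alpha> j"
    using jd by (intro member_le_sum) auto
  finally have "\<alpha> j * \<alpha> j \<le> inner_d d \<alpha> \<alpha>" .
  moreover have "0 < \<alpha> j * \<alpha> j" using j not_real_square_gt_zero by blast
  ultimately show ?thesis by linarith
qed

lemma inner_refl:
  assumes "inner_d d \<alpha> \<alpha> \<noteq> 0"
  shows "inner_d d \<alpha> (refl_d d \<alpha> z) = - inner_d d \<alpha> z"
proof -
  have "inner_d d \<alpha> (refl_d d \<alpha> z) = inner_d d \<alpha> z - cc d \<alpha> z * inner_d d \<alpha> \<alpha>"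
    unfolding refl_alt[abs_def] by (rule inner_lin)
  thus ?thesis using assms unfolding cc_def by simp
qed

lemma normsq_refl:
  assumes "inner_d d \<alpha> \<alpha> \<noteq> 0"
  shows "normsq_d d (refl_d d \<alpha> z) = normsq_d d z"
proof -
  define c where "c = cc d \<alpha> z"
  have "normsq_d d (refl_d d \<alpha> z) = (\<Sum>i<d. z i * z i - 2 * c * (\<alpha> i * z i) + c * c * (\<alpha> i * \<alpha> i))"
    unfolding normsq_d_def inner_d_def refl_alt c_def by (intro sum.cong refl) (simp add: algebra_simps)
  also have "\<dots> = normsq_d d z - 2 * c * inner_d d \<alpha> z + c * c * inner_d d \<alpha> \<alpha>"
    unfolding normsq_d_def inner_d_def by (simp add: sum.distrib sum_subtractf sum_distrib_left)
  also have "c * c * inner_d d \<alpha> \<alpha> = 2 * c * inner_d d \<alpha> z"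
    using assms unfolding c_def cc_def by (simp add: field_simps)
  finally show ?thesis by simp
qed

lemma refl_tail: "\<forall>i\<ge>d. \<alpha> i = 0 \<Longrightarrow> i \<ge> d \<Longrightarrow> refl_d d \<alpha> z i = z i"
  unfolding refl_alt by simp

lemma cont_coord[continuous_intros]: "continuous_on S (\<lambda>z::nat\<Rightarrow>real. z k)"
  by (rule continuous_on_subset[OF continuous_on_product_coordinates]) simp

lemma cont_inner[continuous_intros]: "continuous_on S (\<lambda>z. inner_d d a z)"
  unfolding inner_d_def by (intro continuous_intros)

lemma cont_refl[continuous_intros]: "continuous_on S (\<lambda>z. refl_d d \<alpha> z k)"
  unfolding refl_alt cc_def divide_inverse by (intro continuous_intros)

lemma cont_refl_full[continuous_intros]: "continuous_on S (\<lambda>z. refl_d d \<alpha> z)"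
  by (intro continuous_on_coordinatewise_then_product cont_refl)

lemma prod_telescope:
  fixes f g :: "nat \<Rightarrow> real"
  shows "(\<Prod>k<m. f k) - (\<Prod>k<m. g k) = (\<Sum>k<m. (\<Prod>l<k. f l) * (f k - g k) * (\<Prod>l\<in>{k<..<m}. g l))"
proof (induction m)
  case 0 show ?case by simp
next
  case (Suc m)
  have e: "{k<..<Suc m} = insert m {k<..<m}" if "k < m" for k using that by auto
  have "(\<Sum>k<Suc m. (\<Prod>l<k. f l) * (f k - g k) * (\<Prod>l\<in>{k<..<Suc m}. g l))
      = (\<Sum>k<m. (\<Prod>l<k. f l) * (f k - g k) * (\<Prod>l\<in>{k<..<m}. g l)) * g m + (\<Prod>l<m. f l) * (f m - g m)"
  proof -
    have "(\<Sum>k<m. (\<Prod>l<k. f l) * (f k - g k) * (\<Prod>l\<in>{k<..<Suc m}. g l))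
        = (\<Sum>k<m. (\<Prod>l<k. f l) * (f k - g k) * (\<Prod>l\<in>{k<..<m}. g l) * g m)"
      by (intro sum.cong refl) (simp add: e mult_ac)
    moreover have "{m<..<Suc m} = {}" by auto
    ultimately show ?thesis by (simp add: sum_distrib_right)
  qed
  also have "\<dots> = ((\<Prod>k<m. f k) - (\<Prod>k<m. g k)) * g m + (\<Prod>l<m. f l) * (f m - g m)"
    using Suc by simp
  also have "\<dots> = (\<Prod>k<Suc m. f k) - (\<Prod>k<Suc m. g k)" by (simp add: algebra_simps)
  finally show ?case by simp
qed

definition monom_d :: "nat \<Rightarrow> (nat \<Rightarrow> nat) \<Rightarrow> vec \<Rightarrow> real" where
  "monom_d d \<beta> x = (\<Prod>k<d. x k ^ \<beta> k)"

definition MM :: "nat \<Rightarrow> vec \<Rightarrow> (nat \<Rightarrow> nat) \<Rightarrow> vec \<Rightarrow> real" where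
  "MM d \<alpha> \<beta> z = (\<Sum>k<d. (\<Prod>l<k. z l ^ \<beta> l)
      * (\<alpha> k * (\<Sum>i<\<beta> k. refl_d d \<alpha> z k ^ (\<beta> k - Suc i) * z k ^ i))
      * (\<Prod>l\<in>{k<..<d}. refl_d d \<alpha> z l ^ \<beta> l))"

lemma mono_diff: "monom_d d \<beta> z - monom_d d \<beta> (refl_d d \<alpha> z) = cc d \<alpha> z * MM d \<alpha> \<beta> z"
proof -
  have "monom_d d \<beta> z - monom_d d \<beta> (refl_d d \<alpha> z) = (\<Sum>k<d. (\<Prod>l<k. z l ^ \<beta> l)
      * (z k ^ \<beta> k - refl_d d \<alpha> z k ^ \<beta> k) * (\<Prod>l\<in>{k<..<d}. refl_d d \<alpha> z l ^ \<beta> l))"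
    unfolding monom_d_def by (rule prod_telescope)
  also have "\<dots> = (\<Sum>k<d. cc d \<alpha> z * ((\<Prod>l<k. z l ^ \<beta> l)
      * (\<alpha> k * (\<Sum>i<\<beta> k. refl_d d \<alpha> z k ^ (\<beta> k - Suc i) * z k ^ i))
      * (\<Prod>l\<in>{k<..<d}. refl_d d \<alpha> z l ^ \<beta> l)))"
  proof (intro sum.cong refl)
    fix k
    have "z k ^ \<beta> k - refl_d d \<alpha> z k ^ \<beta> k = (z k - refl_d d \<alpha> z k) * (\<Sum>i<\<beta> k. refl_d d \<alpha> z k ^ (\<beta> k - Suc i) * z k ^ i)"
      by (rule power_diff_sumr2)
    also have "z k - refl_d d \<alpha> z k = cc d \<alpha> z * \<alpha> k" unfolding refl_alt by simp
    finally show "(\<Prod>l<k. z l ^ \<beta> l) * (z k ^ \<beta> k - refl_d d \<alpha> z k ^ \<beta> k) * (\<Prod>l\<in>{k<..<d}. refl_d d \<alpha> z l ^ \<beta> l)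
      = cc d \<alpha> z * ((\<Prod>l<k. z l ^ \<beta> l) * (\<alpha> k * (\<Sum>i<\<beta> k. refl_d d \<alpha> z k ^ (\<beta> k - Suc i) * z k ^ i))
        * (\<Prod>l\<in>{k<..<d}. refl_d d \<alpha> z l ^ \<beta> l))" by (simp add: mult_ac)
  qed
  also have "\<dots> = cc d \<alpha> z * MM d \<alpha> \<beta> z" unfolding MM_def by (simp add: sum_distrib_left)
  finally show ?thesis .
qed

lemma cont_MM[continuous_intros]: "continuous_on S (\<lambda>z. MM d \<alpha> \<beta> z)"
  unfolding MM_def by (intro continuous_intros)

definition projd :: "nat \<Rightarrow> vec \<Rightarrow> vec" where
  "projd d z = (\<lambda>k. if k < d then z k else 0)"

lemma inner_proj: "inner_d d a (projd d z) = inner_d d a z"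
  unfolding inner_d_def projd_def by (intro sum.cong refl) auto

lemma proj_apply: "k < d \<Longrightarrow> projd d z k = z k"
  unfolding projd_def by simp

lemma refl_proj: "k < d \<Longrightarrow> refl_d d \<alpha> (projd d z) k = refl_d d \<alpha> z k"
  unfolding refl_d_def inner_proj by (simp add: proj_apply)

lemma MM_proj: "MM d \<alpha> \<beta> (projd d z) = MM d \<alpha> \<beta> z"
  unfolding MM_def
  by (intro sum.cong refl arg_cong2[where f="(*)"] prod.cong) (auto simp: refl_proj proj_apply)

lemma mono_proj: "monom_d d \<beta> (projd d z) = monom_d d \<beta> z"
  unfolding monom_d_def projd_def by (intro prod.cong refl) auto


definition Pc :: "nat \<Rightarrow> nat \<Rightarrow> ((nat \<Rightarrow> nat) \<Rightarrow> cl) \<Rightarrow> vec \<Rightarrow> cl" where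
  "Pc d n c = (\<lambda>x A. \<Sum>\<beta>\<in>multi_idx d n. c \<beta> A * complex_of_real (monom_d d \<beta> x))"

definition QP :: "nat \<Rightarrow> nat \<Rightarrow> ((nat \<Rightarrow> nat) \<Rightarrow> cl) \<Rightarrow> vec \<Rightarrow> vec \<Rightarrow> cl" where
  "QP d n c \<alpha> z = (\<lambda>A. \<Sum>\<beta>\<in>multi_idx d n. c \<beta> A * complex_of_real (2 / inner_d d \<alpha> \<alpha> * MM d \<alpha> \<beta> z))"

lemma hom_poly_Pc: "hom_poly d n P \<Longrightarrow> \<exists>c. (\<forall>\<beta> A. \<not> A \<subseteq> {..<d} \<longrightarrow> c \<beta> A = 0) \<and> P = Pc d n c"
  unfolding hom_poly_def Pc_def monom_d_def by blast

lemma P_refl_diff: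
  assumes "inner_d d \<alpha> \<alpha> \<noteq> 0"
  shows "Pc d n c z A - Pc d n c (refl_d d \<alpha> z) A = complex_of_real (inner_d d \<alpha> z) * QP d n c \<alpha> z A"
proof -
  have "Pc d n c z A - Pc d n c (refl_d d \<alpha> z) A
     = (\<Sum>\<beta>\<in>multi_idx d n. c \<beta> A * complex_of_real (monom_d d \<beta> z - monom_d d \<beta> (refl_d d \<alpha> z)))"
    unfolding Pc_def by (simp add: sum_subtractf right_diff_distrib)
  also have "\<dots> = (\<Sum>\<beta>\<in>multi_idx d n. complex_of_real (inner_d d \<alpha> z) *
        (c \<beta> A * complex_of_real (2 / inner_d d \<alpha> \<alpha> * MM d \<alpha> \<beta> z)))"
    using assms by (intro sum.cong refl) (simp add: mono_diff cc_def field_simps)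
  also have "\<dots> = complex_of_real (inner_d d \<alpha> z) * QP d n c \<alpha> z A"
    unfolding QP_def by (simp add: sum_distrib_left)
  finally show ?thesis .
qed

lemma cont_QP: "continuous_on S (\<lambda>z. QP d n c \<alpha> z A)"
  unfolding QP_def by (intro continuous_intros)

lemma QP_proj: "QP d n c \<alpha> (projd d z) = QP d n c \<alpha> z"
  unfolding QP_def by (simp add: MM_proj)

lemma Pc_proj: "Pc d n c (projd d z) = Pc d n c z"
  unfolding Pc_def by (simp add: mono_proj)

lemma supp_Pc: "(\<forall>\<beta> A. \<not> A \<subseteq> {..<d} \<longrightarrow> c \<beta> A = 0) \<Longrightarrow> suppc d (Pc d n c z)"
  unfolding suppc_def Pc_def by simp

definition Dmono :: "nat \<Rightarrow> (nat \<Rightarrow> nat) \<Rightarrow> vec \<Rightarrow> nat \<Rightarrow> real" where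
  "Dmono d \<beta> y i = real (\<beta> i) * y i ^ (\<beta> i - 1) * (\<Prod>k\<in>{..<d}-{i}. y k ^ \<beta> k)"

lemma mono_upd: "i < d \<Longrightarrow> monom_d d \<beta> (y(i := v)) = v ^ \<beta> i * (\<Prod>k\<in>{..<d}-{i}. y k ^ \<beta> k)"
  unfolding monom_d_def by (subst prod.remove[of _ i]) auto

lemma mono_split: "i < d \<Longrightarrow> monom_d d \<beta> y = y i ^ \<beta> i * (\<Prod>k\<in>{..<d}-{i}. y k ^ \<beta> k)"
  using mono_upd[of i d \<beta> y "y i"] by simp

lemma deriv_mono:
  assumes "i < d"
  shows "((\<lambda>t. monom_d d \<beta> (y(i := y i + t))) has_real_derivative Dmono d \<beta> y i) (at 0)"
proof -
  have "((\<lambda>t. (y i + t) ^ \<beta> i * (\<Prod>k\<in>{..<d}-{i}. y k ^ \<beta> k)) has_real_derivative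
      real (\<beta> i) * (y i + 0) ^ (\<beta> i - 1) * 1 * (\<Prod>k\<in>{..<d}-{i}. y k ^ \<beta> k)) (at 0)"
    by (intro derivative_eq_intros) auto
  thus ?thesis using assms by (simp add: mono_upd Dmono_def)
qed

lemma euler_mono1: "y i * Dmono d \<beta> y i = real (\<beta> i) * monom_d d \<beta> y" if "i < d"
proof (cases "\<beta> i")
  case 0 thus ?thesis by (simp add: Dmono_def)
next
  case (Suc m)
  thus ?thesis using that by (simp add: Dmono_def mono_split[OF that])
qed

lemma euler_mono: "\<beta> \<in> multi_idx d n \<Longrightarrow> (\<Sum>i<d. y i * Dmono d \<beta> y i) = real n * monom_d d \<beta> y"
  unfolding multi_idx_def
  by (simp add: euler_mono1 sum_distrib_right[symmetric] of_nat_sum[symmetric] del: of_nat_sum)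

definition DP :: "nat \<Rightarrow> nat \<Rightarrow> ((nat \<Rightarrow> nat) \<Rightarrow> cl) \<Rightarrow> vec \<Rightarrow> nat \<Rightarrow> cl" where
  "DP d n c y i = (\<lambda>A. \<Sum>\<beta>\<in>multi_idx d n. c \<beta> A * complex_of_real (Dmono d \<beta> y i))"

lemma deriv_P:
  assumes "i < d"
  shows "((\<lambda>t. Pc d n c (y(i := y i + t)) A) has_vector_derivative DP d n c y i A) (at 0)"
  unfolding Pc_def DP_def
  by (intro has_vector_derivative_sum has_vector_derivative_mult_right has_vector_derivative_of_real
     deriv_mono[OF assms])

lemma euler_P: "(\<Sum>i<d. complex_of_real (y i) * DP d n c y i A) = of_nat n * Pc d n c y A"
proof -
  have "(\<Sum>i<d. complex_of_real (y i) * DP d n c y i A)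
      = (\<Sum>\<beta>\<in>multi_idx d n. c \<beta> A * complex_of_real (\<Sum>i<d. y i * Dmono d \<beta> y i))"
    unfolding DP_def by (simp add: sum_distrib_left sum.swap[of _ "{..<d}"] mult_ac)
  also have "\<dots> = (\<Sum>\<beta>\<in>multi_idx d n. of_nat n * (c \<beta> A * complex_of_real (monom_d d \<beta> y)))"
    by (intro sum.cong refl) (simp add: euler_mono)
  finally show ?thesis unfolding Pc_def by (simp add: sum_distrib_left)
qed

lemma Dmono_proj: "Dmono d \<beta> (projd d y) i = Dmono d \<beta> y i" if "i < d"
  unfolding Dmono_def using that by (auto simp: proj_apply intro!: prod.cong)

lemma DP_proj: "i < d \<Longrightarrow> DP d n c (projd d y) i = DP d n c y i"
  unfolding DP_def by (simp add: Dmono_proj)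

lemma cont_Pc: "continuous_on S (\<lambda>z. Pc d n c z A)"
  unfolding Pc_def monom_d_def by (intro continuous_intros)


lemma isCont_of_on: "continuous_on UNIV g \<Longrightarrow> isCont g x"
  using continuous_on_eq_continuous_at[of UNIV g] by simp

lemma limpt_hyper:
  assumes "\<forall>i\<ge>d. \<alpha> i = 0" "\<alpha> \<noteq> (\<lambda>_. 0)" "inner_d d \<alpha> y = 0"
  shows "\<not> trivial_limit (at y within {z. inner_d d \<alpha> z \<noteq> 0})"
proof -
  have ia: "inner_d d \<alpha> \<alpha> > 0" using inner_pos assms by blast
  define g where "g = (\<lambda>e::real. (\<lambda>k. y k + e * \<alpha> k))"
  have cg: "continuous_on UNIV g" unfolding g_def by (intro continuous_intros)
  have "((\<lambda>n. g (inverse (real (Suc n)))) \<longlongrightarrow> g 0) sequentially"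
    by (rule isCont_tendsto_compose[OF isCont_of_on[OF cg] LIMSEQ_inverse_real_of_nat])
  moreover have "g 0 = y" unfolding g_def by simp
  moreover have "g (inverse (real (Suc n))) \<in> {z. inner_d d \<alpha> z \<noteq> 0} - {y}" for n
  proof -
    have "inner_d d \<alpha> (g (inverse (real (Suc n)))) = inner_d d \<alpha> y + inverse (real (Suc n)) * inner_d d \<alpha> \<alpha>"
      unfolding g_def inner_d_def by (simp add: sum.distrib sum_distrib_left algebra_simps)
    hence "inner_d d \<alpha> (g (inverse (real (Suc n)))) \<noteq> 0" using assms(3) ia by simp
    moreover have "g (inverse (real (Suc n))) \<noteq> y"
      using \<open>inner_d d \<alpha> (g (inverse (real (Suc n)))) \<noteq> 0\<close> assms(3) by auto
    ultimately show ?thesis by simp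
  qed
  ultimately have "y islimpt {z. inner_d d \<alpha> z \<noteq> 0}"
    unfolding islimpt_sequential by metis
  thus ?thesis by (simp add: trivial_limit_within)
qed

lemma diff_quot_eq:
  assumes "\<forall>i\<ge>d. \<alpha> i = 0" "\<alpha> \<noteq> (\<lambda>_. 0)"
    and eq: "\<And>z A. f z A - f (refl_d d \<alpha> z) A = complex_of_real (inner_d d \<alpha> z) * G z A"
    and cont: "\<And>A. continuous_on UNIV (\<lambda>z. G z A)"
  shows "diff_quot d f \<alpha> y = G y"
proof -
  define q where "q = (\<lambda>y. cl_scale (1 / inner_d d \<alpha> y) (\<lambda>A. f y A - f (refl_d d \<alpha> y) A))"
  have qG: "q z = G z" if "inner_d d \<alpha> z \<noteq> 0" for z
    unfolding q_def cl_scale_def eq using that by (simp add: field_simps)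
  show ?thesis
  proof (cases "inner_d d \<alpha> y = 0")
    case False
    thus ?thesis unfolding diff_quot_def Let_def q_def[symmetric] using qG by simp
  next
    case True
    have "Lim (at y within {z. inner_d d \<alpha> z \<noteq> 0}) (\<lambda>z. q z A) = G y A" for A
    proof (rule tendsto_Lim)
      show "\<not> trivial_limit (at y within {z. inner_d d \<alpha> z \<noteq> 0})"
        using limpt_hyper assms True by blast
      have "((\<lambda>z. G z A) \<longlongrightarrow> G y A) (at y within {z. inner_d d \<alpha> z \<noteq> 0})"
        using isCont_of_on[OF cont[of A], of y] unfolding isCont_def by (rule tendsto_within_subset) simp
      moreover have "eventually (\<lambda>z. G z A = q z A) (at y within {z. inner_d d \<alpha> z \<noteq> 0})"
        unfolding eventually_at_filter using qG by (intro always_eventually) auto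
      ultimately show "((\<lambda>z. q z A) \<longlongrightarrow> G y A) (at y within {z. inner_d d \<alpha> z \<noteq> 0})"
        using tendsto_cong by fastforce
    qed
    thus ?thesis unfolding diff_quot_def Let_def q_def[symmetric] using True by auto
  qed
qed


lemma normsq_upd: "i < d \<Longrightarrow> normsq_d d (y(i := v)) = normsq_d d y - y i ^ 2 + v ^ 2"
  unfolding normsq_d_def inner_d_def
  by (simp add: sum.remove[of "{..<d}" i] power2_eq_square)

lemma deriv_r: "i < d \<Longrightarrow> ((\<lambda>t. normsq_d d (y(i := y i + t))) has_real_derivative 2 * y i) (at 0)"
proof -
  assume i: "i < d"
  have "((\<lambda>t. normsq_d d y - y i ^ 2 + (y i + t) ^ 2) has_real_derivative 2 * y i) (at 0)"
    by (auto intro!: derivative_eq_intros)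
  thus ?thesis by (simp add: normsq_upd[OF i])
qed

lemma deriv_pr: "i < d \<Longrightarrow> ((\<lambda>t. poly p (normsq_d d (y(i := y i + t)))) has_real_derivative
     poly (pderiv p) (normsq_d d y) * (2 * y i)) (at 0)"
  using DERIV_chain2[OF poly_DERIV[of p] deriv_r[of i d y]] by simp

lemma cont_normsq[continuous_intros]: "continuous_on S (\<lambda>z. normsq_d d z)"
  unfolding normsq_d_def inner_d_def by (intro continuous_intros)

lemma deriv_E:
  assumes "\<And>B. ((\<lambda>t. g t B) has_vector_derivative g' B) F"
  shows "((\<lambda>t. E d j (g t) A) has_vector_derivative E d j g' A) F"
proof (cases "j < d")
  case True thus ?thesis
    by (cases "A \<subseteq> {..<d}") (simp_all add: E_explicit, intro derivative_intros assms)
next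
  case False
  have "E d j b A = 0" for b
    unfolding cl_mult_def cl_gen_def using False by (auto intro!: sum.neutral)
  thus ?thesis by simp
qed

lemma E_zero_out: "\<not> j < d \<Longrightarrow> E d j b A = 0"
  unfolding cl_mult_def cl_gen_def by (auto intro!: sum.neutral)

lemma cont_E[continuous_intros]:
  assumes "\<And>B. continuous_on S (\<lambda>z. g z B)"
  shows "continuous_on S (\<lambda>z. E d j (g z) A)"
proof (cases "j < d")
  case True thus ?thesis
    by (cases "A \<subseteq> {..<d}") (simp_all add: E_explicit, intro continuous_intros assms)
next
  case False thus ?thesis by (simp add: E_zero_out)
qed

lemma deriv_vm:
  assumes "i < d" "\<And>B. ((\<lambda>t. g t B) has_vector_derivative g' B) (at 0)"
  shows "((\<lambda>t. cl_mult d (cl_vec d (y(i := y i + t))) (g t) A) has_vector_derivative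
      E d i (g 0) A + cl_mult d (cl_vec d y) g' A) (at 0)"
proof -
  have c: "\<And>B. continuous (at 0) (\<lambda>t. g t B)"
    using assms(2) has_vector_derivative_continuous by blast
  have "((\<lambda>t. \<Sum>j<d. complex_of_real ((y(i := y i + t)) j) * E d j (g t) A) has_vector_derivative
     (\<Sum>j<d. complex_of_real ((y(i := y i + 0)) j) * E d j g' A
        + complex_of_real (if j = i then 1 else 0) * E d j (g 0) A)) (at 0)"
  proof (intro has_vector_derivative_sum)
    fix j assume "j \<in> {..<d}"
    show "((\<lambda>t. complex_of_real ((y(i := y i + t)) j) * E d j (g t) A) has_vector_derivative
        complex_of_real ((y(i := y i + 0)) j) * E d j g' A
        + complex_of_real (if j = i then 1 else 0) * E d j (g 0) A) (at 0)"
    proof (cases "j = i")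
      case True
      have "((\<lambda>t. complex_of_real (y i + t) * E d j (g t) A) has_vector_derivative
        complex_of_real (y i + 0) * E d j g' A + complex_of_real 1 * E d j (g 0) A) (at 0)"
        by (intro has_vector_derivative_mult has_vector_derivative_of_real deriv_E assms(2)
            derivative_eq_intros) auto
      thus ?thesis using True by simp
    next
      case False
      have "((\<lambda>t. complex_of_real (y j) * E d j (g t) A) has_vector_derivative
        complex_of_real (y j) * E d j g' A) (at 0)"
        by (intro has_vector_derivative_mult_right deriv_E assms(2))
      thus ?thesis using False by simp
    qed
  qed
  moreover have "(\<Sum>j<d. complex_of_real ((y(i := y i + 0)) j) * E d j g' A
        + complex_of_real (if j = i then 1 else 0) * E d j (g 0) A)
      = E d i (g 0) A + cl_mult d (cl_vec d y) g' A"
  proof -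
    have "(\<Sum>j<d. complex_of_real (if j = i then 1 else 0) * E d j (g 0) A) = E d i (g 0) A"
      using assms(1) by (simp add: if_distrib[of "\<lambda>x. complex_of_real x * _"] sum.delta cong: if_cong)
    moreover have "(y(i := y i + 0)) = y" by simp
    ultimately show ?thesis by (simp add: sum.distrib cl_vec_mult)
  qed
  moreover have "(\<lambda>t. cl_mult d (cl_vec d (y(i := y i + t))) (g t) A)
      = (\<lambda>t. \<Sum>j<d. complex_of_real ((y(i := y i + t)) j) * E d j (g t) A)"
    by (simp only: cl_vec_mult)
  ultimately show ?thesis by simp
qed


locale setting =
  fixes d n :: nat and c :: "(nat \<Rightarrow> nat) \<Rightarrow> cl" and Rp :: "vec set" and \<kappa> :: "vec \<Rightarrow> real"
  assumes csupp: "\<forall>\<beta> A. \<not> A \<subseteq> {..<d} \<longrightarrow> c \<beta> A = 0"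
    and Rok: "\<forall>\<alpha>\<in>Rp. (\<forall>i\<ge>d. \<alpha> i = 0) \<and> \<alpha> \<noteq> (\<lambda>_. 0)"
    and Rfin: "finite Rp"
    and harm: "\<forall>y. dunkl_dirac d Rp \<kappa> (Pc d n c) y = (\<lambda>_. 0)"
begin

abbreviation "P \<equiv> Pc d n c"
abbreviation "Q \<equiv> QP d n c"
abbreviation "DPi \<equiv> DP d n c"
abbreviation "vm y b \<equiv> cl_mult d (cl_vec d y) b"
abbreviation "rr y \<equiv> normsq_d d y"

definition F1 :: "real poly \<Rightarrow> vec \<Rightarrow> cl" where
  "F1 p = (\<lambda>y. cl_scale (poly p (rr y)) (P y))"
definition F2 :: "real poly \<Rightarrow> vec \<Rightarrow> cl" where
  "F2 p = (\<lambda>y. cl_scale (poly p (rr y)) (vm y (P y)))"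

lemma ia_pos: "\<alpha> \<in> Rp \<Longrightarrow> inner_d d \<alpha> \<alpha> > 0"
  using Rok inner_pos by blast

lemma supp_P: "suppc d (P y)" using supp_Pc csupp by blast

lemma partial_P: "i < d \<Longrightarrow> partial_d i P y = DPi y i"
  unfolding partial_d_def by (intro ext vector_derivative_at deriv_P)

lemma dq_P: "\<alpha> \<in> Rp \<Longrightarrow> diff_quot d P \<alpha> y = Q \<alpha> y"
proof (rule diff_quot_eq)
  assume a: "\<alpha> \<in> Rp"
  show "\<forall>i\<ge>d. \<alpha> i = 0" "\<alpha> \<noteq> (\<lambda>_. 0)" using Rok a by auto
  show "P z A - P (refl_d d \<alpha> z) A = complex_of_real (inner_d d \<alpha> z) * Q \<alpha> z A" for z A
    using ia_pos[OF a] by (intro P_refl_diff) simp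
  show "continuous_on UNIV (\<lambda>z. Q \<alpha> z A)" for A by (rule cont_QP)
qed

lemma dunkl_P: "i < d \<Longrightarrow> dunkl d Rp \<kappa> i P y A
    = DPi y i A + (\<Sum>\<alpha>\<in>Rp. complex_of_real (\<kappa> \<alpha> * \<alpha> i) * Q \<alpha> y A)"
  unfolding dunkl_def by (simp add: partial_P dq_P)

lemma partial_F1:
  assumes "i < d"
  shows "partial_d i (F1 p) y A = complex_of_real (poly (pderiv p) (rr y) * (2 * y i)) * P y A
       + complex_of_real (poly p (rr y)) * DPi y i A"
proof -
  have "((\<lambda>t. complex_of_real (poly p (rr (y(i := y i + t)))) * P (y(i := y i + t)) A) has_vector_derivative
     complex_of_real (poly p (rr (y(i := y i + 0)))) * DPi y i A
     + complex_of_real (poly (pderiv p) (rr y) * (2 * y i)) * P (y(i := y i + 0)) A) (at 0)"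
    by (intro has_vector_derivative_mult has_vector_derivative_of_real deriv_pr deriv_P assms)
  hence "vector_derivative (\<lambda>t. F1 p (y(i := y i + t)) A) (at 0) =
     complex_of_real (poly p (rr (y(i := y i + 0)))) * DPi y i A
     + complex_of_real (poly (pderiv p) (rr y) * (2 * y i)) * P (y(i := y i + 0)) A"
    unfolding F1_def cl_scale_def by (rule vector_derivative_at)
  thus ?thesis unfolding partial_d_def by simp
qed

lemma dq_F1:
  assumes "\<alpha> \<in> Rp"
  shows "diff_quot d (F1 p) \<alpha> y = cl_scale (poly p (rr y)) (Q \<alpha> y)"
proof -
  have ia: "inner_d d \<alpha> \<alpha> \<noteq> 0" using ia_pos[OF assms] by simp
  show ?thesis
  proof (rule diff_quot_eq[where G="\<lambda>z. cl_scale (poly p (rr z)) (Q \<alpha> z)"])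
    show "\<forall>i\<ge>d. \<alpha> i = 0" "\<alpha> \<noteq> (\<lambda>_. 0)" using Rok assms by auto
    fix z A
    show "F1 p z A - F1 p (refl_d d \<alpha> z) A = complex_of_real (inner_d d \<alpha> z) * cl_scale (poly p (rr z)) (Q \<alpha> z) A"
      unfolding F1_def cl_scale_def normsq_refl[OF ia]
      using P_refl_diff[OF ia, of n c z A] by (simp add: algebra_simps)
    show "continuous_on UNIV (\<lambda>z. cl_scale (poly p (rr z)) (Q \<alpha> z) A)" for A
      unfolding cl_scale_def by (intro continuous_intros cont_QP)
  qed
qed

lemma dunkl_F1:
  assumes "i < d"
  shows "dunkl d Rp \<kappa> i (F1 p) y = (\<lambda>A. complex_of_real (poly (pderiv p) (rr y) * (2 * y i)) * P y A
       + complex_of_real (poly p (rr y)) * dunkl d Rp \<kappa> i P y A)"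
proof
  fix A
  show "dunkl d Rp \<kappa> i (F1 p) y A = complex_of_real (poly (pderiv p) (rr y) * (2 * y i)) * P y A
       + complex_of_real (poly p (rr y)) * dunkl d Rp \<kappa> i P y A"
    unfolding dunkl_def
    by (simp add: partial_F1 assms dq_F1 partial_P dq_P cl_scale_def distrib_left sum_distrib_left mult_ac
        cong: sum.cong)
qed

lemma DD_F1:
  "dunkl_dirac d Rp \<kappa> (F1 p) y C = complex_of_real (2 * poly (pderiv p) (rr y)) * vm y (P y) C
     + complex_of_real (poly p (rr y)) * dunkl_dirac d Rp \<kappa> P y C"
proof -
  have "dunkl_dirac d Rp \<kappa> (F1 p) y C = (\<Sum>i<d. complex_of_real (2 * poly (pderiv p) (rr y)) * (complex_of_real (y i) * E d i (P y) C)
     + complex_of_real (poly p (rr y)) * E d i (dunkl d Rp \<kappa> i P y) C)"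
    unfolding dunkl_dirac_def
  proof (intro sum.cong refl)
    fix i assume "i \<in> {..<d}"
    hence i: "i < d" by simp
    show "E d i (dunkl d Rp \<kappa> i (F1 p) y) C = complex_of_real (2 * poly (pderiv p) (rr y)) * (complex_of_real (y i) * E d i (P y) C)
     + complex_of_real (poly p (rr y)) * E d i (dunkl d Rp \<kappa> i P y) C"
      unfolding dunkl_F1[OF i] cl_mult_add2 cl_mult_scale2 by (simp add: mult_ac)
  qed
  also have "\<dots> = complex_of_real (2 * poly (pderiv p) (rr y)) * vm y (P y) C
     + complex_of_real (poly p (rr y)) * dunkl_dirac d Rp \<kappa> P y C"
    unfolding dunkl_dirac_def by (simp add: sum.distrib sum_distrib_left cl_vec_mult)
  finally show ?thesis .
qed

lemma Dplus_F1: "D_plus d Rp \<kappa> (F1 p) = F2 (smult 2 (pderiv p) - smult 2 p)"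
proof (intro ext)
  fix y C
  have "vm y (F1 p y) C = complex_of_real (poly p (rr y)) * vm y (P y) C"
    unfolding F1_def cl_scale_def by (rule cl_mult_scale2)
  thus "D_plus d Rp \<kappa> (F1 p) y C = F2 (smult 2 (pderiv p) - smult 2 p) y C"
    unfolding D_plus_def F2_def cl_scale_def using harm
    by (simp add: DD_F1 algebra_simps)
qed

end


lemma vm_scalevec: "cl_mult d (cl_vec d (\<lambda>k. a * u k)) b C = complex_of_real a * cl_mult d (cl_vec d u) b C"
  by (simp add: cl_vec_mult sum_distrib_left mult_ac)

lemma vm_diffvec: "cl_mult d (cl_vec d u) b C - cl_mult d (cl_vec d v) b C = cl_mult d (cl_vec d (\<lambda>k. u k - v k)) b C"
  by (simp add: cl_vec_mult sum_subtractf[symmetric] left_diff_distrib)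

lemma vm_anti:
  assumes "suppc d b"
  shows "cl_mult d (cl_vec d u) (cl_mult d (cl_vec d v) b) C
     = - cl_mult d (cl_vec d v) (cl_mult d (cl_vec d u) b) C - 2 * complex_of_real (inner_d d u v) * b C"
proof -
  have "cl_mult d (cl_vec d u) (cl_mult d (cl_vec d v) b) C
      = (\<Sum>i<d. complex_of_real (u i) * E d i (cl_mult d (cl_vec d v) b) C)"
    by (rule cl_vec_mult)
  also have "\<dots> = (\<Sum>i<d. - (complex_of_real (u i) * cl_mult d (cl_vec d v) (E d i b) C)
       - complex_of_real (u i * v i) * (2 * b C))"
  proof (intro sum.cong refl)
    fix i assume "i \<in> {..<d}"
    hence i: "i < d" by simp
    show "complex_of_real (u i) * E d i (cl_mult d (cl_vec d v) b) C = - (complex_of_real (u i) * cl_mult d (cl_vec d v) (E d i b) C)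
       - complex_of_real (u i * v i) * (2 * b C)"
      unfolding E_vm[OF i assms] by (simp add: algebra_simps)
  qed
  also have "\<dots> = - (\<Sum>i<d. complex_of_real (u i) * cl_mult d (cl_vec d v) (E d i b) C)
       - (\<Sum>i<d. complex_of_real (u i * v i)) * (2 * b C)"
    by (simp only: sum_subtractf sum_negf sum_distrib_right)
  also have "(\<Sum>i<d. complex_of_real (u i) * cl_mult d (cl_vec d v) (E d i b) C)
      = cl_mult d (cl_vec d v) (cl_mult d (cl_vec d u) b) C"
    by (simp only: cl_vec_mult_fun[of d u b] cl_mult_sum2 cl_mult_scale2)
  also have "(\<Sum>i<d. complex_of_real (u i * v i)) = complex_of_real (inner_d d u v)"
    unfolding inner_d_def by simp
  finally show ?thesis by (simp add: mult_ac)
qed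

context setting
begin

lemma partial_F2:
  assumes "i < d"
  shows "partial_d i (F2 p) y A = complex_of_real (poly (pderiv p) (rr y) * (2 * y i)) * vm y (P y) A
       + complex_of_real (poly p (rr y)) * (E d i (P y) A + vm y (DPi y i) A)"
proof -
  have "((\<lambda>t. complex_of_real (poly p (rr (y(i := y i + t)))) * vm (y(i := y i + t)) (P (y(i := y i + t))) A)
     has_vector_derivative
     complex_of_real (poly p (rr (y(i := y i + 0)))) * (E d i (P (y(i := y i + 0))) A + vm y (DPi y i) A)
     + complex_of_real (poly (pderiv p) (rr y) * (2 * y i)) * vm (y(i := y i + 0)) (P (y(i := y i + 0))) A) (at 0)"
    by (intro has_vector_derivative_mult has_vector_derivative_of_real deriv_pr deriv_P deriv_vm assms)
  hence "vector_derivative (\<lambda>t. F2 p (y(i := y i + t)) A) (at 0) =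
     complex_of_real (poly p (rr (y(i := y i + 0)))) * (E d i (P (y(i := y i + 0))) A + vm y (DPi y i) A)
     + complex_of_real (poly (pderiv p) (rr y) * (2 * y i)) * vm (y(i := y i + 0)) (P (y(i := y i + 0))) A"
    unfolding F2_def cl_scale_def by (rule vector_derivative_at)
  thus ?thesis unfolding partial_d_def by simp
qed

definition G2 :: "real poly \<Rightarrow> vec \<Rightarrow> vec \<Rightarrow> cl" where
  "G2 p \<alpha> z = cl_scale (poly p (rr z)) (\<lambda>A. vm z (Q \<alpha> z) A
      + complex_of_real (2 / inner_d d \<alpha> \<alpha>) * vm \<alpha> (P (refl_d d \<alpha> z)) A)"

lemma dq_F2:
  assumes "\<alpha> \<in> Rp"
  shows "diff_quot d (F2 p) \<alpha> y = G2 p \<alpha> y"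
proof -
  have ia: "inner_d d \<alpha> \<alpha> \<noteq> 0" using ia_pos[OF assms] by simp
  show ?thesis
  proof (rule diff_quot_eq)
    show "\<forall>i\<ge>d. \<alpha> i = 0" "\<alpha> \<noteq> (\<lambda>_. 0)" using Rok assms by auto
    fix z A
    define s where "s = refl_d d \<alpha> z"
    have "vm z (P z) A - vm s (P s) A = vm z (\<lambda>B. P z B - P s B) A + (vm z (P s) A - vm s (P s) A)"
      by (simp add: cl_mult_diff2)
    also have "vm z (\<lambda>B. P z B - P s B) A = complex_of_real (inner_d d \<alpha> z) * vm z (Q \<alpha> z) A"
      unfolding s_def P_refl_diff[OF ia] by (rule cl_mult_scale2)
    also have "vm z (P s) A - vm s (P s) A = vm (\<lambda>k. cc d \<alpha> z * \<alpha> k) (P s) A"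
      unfolding vm_diffvec s_def refl_alt by simp
    also have "\<dots> = complex_of_real (inner_d d \<alpha> z) * (complex_of_real (2 / inner_d d \<alpha> \<alpha>) * vm \<alpha> (P s) A)"
      unfolding vm_scalevec cc_def by simp
    finally have "vm z (P z) A - vm s (P s) A = complex_of_real (inner_d d \<alpha> z) *
        (vm z (Q \<alpha> z) A + complex_of_real (2 / inner_d d \<alpha> \<alpha>) * vm \<alpha> (P s) A)"
      by (simp add: distrib_left)
    moreover have "rr s = rr z" unfolding s_def by (rule normsq_refl[OF ia])
    ultimately show "F2 p z A - F2 p (refl_d d \<alpha> z) A = complex_of_real (inner_d d \<alpha> z) * G2 p \<alpha> z A"
      unfolding F2_def G2_def cl_scale_def s_def[symmetric]
      by (simp add: algebra_simps)
  next
    fix A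
    have cP: "continuous_on UNIV (\<lambda>z. P (refl_d d \<alpha> z) B)" for B
      by (rule continuous_on_compose2[OF cont_Pc cont_refl_full]) auto
    show "continuous_on UNIV (\<lambda>z. G2 p \<alpha> z A)"
      unfolding G2_def cl_scale_def cl_vec_mult
      by (intro continuous_intros cont_E cont_QP cP)
  qed
qed

end


context setting
begin

lemma supp_DP: "suppc d (DPi y i)"
  using csupp unfolding suppc_def DP_def by simp

lemma supp_Q: "suppc d (Q \<alpha> y)"
  using csupp unfolding suppc_def QP_def by simp

abbreviation "gam \<equiv> (\<Sum>\<alpha>\<in>Rp. \<kappa> \<alpha>)"

lemma dunkl_F2:
  assumes "i < d"
  shows "dunkl d Rp \<kappa> i (F2 p) y = (\<lambda>A. complex_of_real (poly (pderiv p) (rr y) * (2 * y i)) * vm y (P y) A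
       + complex_of_real (poly p (rr y)) * (E d i (P y) A + vm y (DPi y i) A
       + (\<Sum>\<alpha>\<in>Rp. complex_of_real (\<kappa> \<alpha> * \<alpha> i) * (vm y (Q \<alpha> y) A
            + complex_of_real (2 / inner_d d \<alpha> \<alpha>) * vm \<alpha> (P (refl_d d \<alpha> y)) A))))"
proof
  fix A
  have h: "(\<Sum>\<alpha>\<in>Rp. complex_of_real (\<kappa> \<alpha> * \<alpha> i) * diff_quot d (F2 p) \<alpha> y A)
     = complex_of_real (poly p (rr y)) * (\<Sum>\<alpha>\<in>Rp. (complex_of_real (\<kappa> \<alpha> * \<alpha> i) * (vm y (Q \<alpha> y) A
            + complex_of_real (2 / inner_d d \<alpha> \<alpha>) * vm \<alpha> (P (refl_d d \<alpha> y)) A)))"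
    unfolding sum_distrib_left by (intro sum.cong refl) (simp add: dq_F2 G2_def cl_scale_def mult_ac)
  show "dunkl d Rp \<kappa> i (F2 p) y A = complex_of_real (poly (pderiv p) (rr y) * (2 * y i)) * vm y (P y) A
       + complex_of_real (poly p (rr y)) * (E d i (P y) A + vm y (DPi y i) A
       + (\<Sum>\<alpha>\<in>Rp. complex_of_real (\<kappa> \<alpha> * \<alpha> i) * (vm y (Q \<alpha> y) A
            + complex_of_real (2 / inner_d d \<alpha> \<alpha>) * vm \<alpha> (P (refl_d d \<alpha> y)) A)))"
    unfolding dunkl_def partial_F2[OF assms] h by (simp add: distrib_left)
qed

lemma harm_split: "(\<Sum>i<d. E d i (DPi y i) C) + (\<Sum>\<alpha>\<in>Rp. complex_of_real (\<kappa> \<alpha>) * vm \<alpha> (Q \<alpha> y) C) = 0"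
proof -
  have "dunkl_dirac d Rp \<kappa> P y C = (\<Sum>i<d. E d i (DPi y i) C + (\<Sum>\<alpha>\<in>Rp. complex_of_real (\<kappa> \<alpha> * \<alpha> i) * E d i (Q \<alpha> y) C))"
    unfolding dunkl_dirac_def
  proof (intro sum.cong refl)
    fix i assume "i \<in> {..<d}" hence i: "i < d" by simp
    have "dunkl d Rp \<kappa> i P y = (\<lambda>A. DPi y i A + (\<Sum>\<alpha>\<in>Rp. complex_of_real (\<kappa> \<alpha> * \<alpha> i) * Q \<alpha> y A))"
      using dunkl_P[OF i] by (intro ext) simp
    thus "E d i (dunkl d Rp \<kappa> i P y) C = E d i (DPi y i) C + (\<Sum>\<alpha>\<in>Rp. complex_of_real (\<kappa> \<alpha> * \<alpha> i) * E d i (Q \<alpha> y) C)"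
      by (simp add: cl_mult_add2 cl_mult_sum2 cl_mult_scale2)
  qed
  also have "\<dots> = (\<Sum>i<d. E d i (DPi y i) C) + (\<Sum>\<alpha>\<in>Rp. \<Sum>i<d. complex_of_real (\<kappa> \<alpha> * \<alpha> i) * E d i (Q \<alpha> y) C)"
    by (simp add: sum.distrib) (rule sum.swap)
  also have "(\<Sum>\<alpha>\<in>Rp. \<Sum>i<d. complex_of_real (\<kappa> \<alpha> * \<alpha> i) * E d i (Q \<alpha> y) C)
      = (\<Sum>\<alpha>\<in>Rp. complex_of_real (\<kappa> \<alpha>) * vm \<alpha> (Q \<alpha> y) C)"
    by (intro sum.cong refl) (simp add: cl_vec_mult sum_distrib_left mult_ac)
  finally show ?thesis using harm by simp
qed

end


context setting
begin

lemma S1: "(\<Sum>i<d. complex_of_real (a * (2 * y i)) * E d i (vm y (P y)) C)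
    = - complex_of_real (2 * a * rr y) * P y C"
proof -
  have "(\<Sum>i<d. complex_of_real (a * (2 * y i)) * E d i (vm y (P y)) C)
      = complex_of_real (2 * a) * vm y (vm y (P y)) C"
    unfolding cl_vec_mult[of d y "vm y (P y)"] sum_distrib_left by (intro sum.cong refl) simp
  also have "\<dots> = - complex_of_real (2 * a * rr y) * P y C"
    using vm_vm[OF supp_P] by simp
  finally show ?thesis .
qed

lemma S2: "(\<Sum>i<d. E d i (E d i (P y)) C) = - of_nat d * P y C"
  using E_E_same[OF _ supp_P] by simp

lemma S3: "(\<Sum>i<d. E d i (vm y (DPi y i)) C) = - vm y (\<lambda>B. \<Sum>i<d. E d i (DPi y i) B) C - 2 * of_nat n * P y C"
proof -
  have "(\<Sum>i<d. E d i (vm y (DPi y i)) C) = (\<Sum>i<d. - vm y (E d i (DPi y i)) C - 2 * (complex_of_real (y i) * DPi y i C))"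
    by (intro sum.cong refl) (simp add: E_vm supp_DP)
  also have "\<dots> = - (\<Sum>i<d. vm y (E d i (DPi y i)) C) - 2 * (\<Sum>i<d. complex_of_real (y i) * DPi y i C)"
    by (simp add: sum_subtractf sum_negf sum_distrib_left)
  also have "(\<Sum>i<d. complex_of_real (y i) * DPi y i C) = of_nat n * P y C" by (rule euler_P)
  also have "(\<Sum>i<d. vm y (E d i (DPi y i)) C) = vm y (\<lambda>B. \<Sum>i<d. E d i (DPi y i) B) C"
    by (rule cl_mult_sum2[symmetric])
  finally show ?thesis by simp
qed

lemma swap_vm: "(\<Sum>i<d. \<Sum>\<alpha>\<in>Rp. complex_of_real (k \<alpha> * \<alpha> i) * E d i (X \<alpha>) C)
    = (\<Sum>\<alpha>\<in>Rp. complex_of_real (k \<alpha>) * vm \<alpha> (X \<alpha>) C)"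
proof -
  have "(\<Sum>i<d. \<Sum>\<alpha>\<in>Rp. complex_of_real (k \<alpha> * \<alpha> i) * E d i (X \<alpha>) C)
      = (\<Sum>\<alpha>\<in>Rp. \<Sum>i<d. complex_of_real (k \<alpha> * \<alpha> i) * E d i (X \<alpha>) C)"
    by (rule sum.swap)
  also have "\<dots> = (\<Sum>\<alpha>\<in>Rp. complex_of_real (k \<alpha>) * vm \<alpha> (X \<alpha>) C)"
    by (intro sum.cong refl) (simp add: cl_vec_mult sum_distrib_left mult_ac)
  finally show ?thesis .
qed

lemma S4: "(\<Sum>\<alpha>\<in>Rp. complex_of_real (\<kappa> \<alpha>) * vm \<alpha> (vm y (Q \<alpha> y)) C)
   = - vm y (\<lambda>B. \<Sum>\<alpha>\<in>Rp. complex_of_real (\<kappa> \<alpha>) * vm \<alpha> (Q \<alpha> y) B) C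
     - 2 * (\<Sum>\<alpha>\<in>Rp. complex_of_real (\<kappa> \<alpha>) * (P y C - P (refl_d d \<alpha> y) C))"
proof -
  have "(\<Sum>\<alpha>\<in>Rp. complex_of_real (\<kappa> \<alpha>) * vm \<alpha> (vm y (Q \<alpha> y)) C)
    = (\<Sum>\<alpha>\<in>Rp. - (complex_of_real (\<kappa> \<alpha>) * vm y (vm \<alpha> (Q \<alpha> y)) C)
        - 2 * (complex_of_real (\<kappa> \<alpha>) * (P y C - P (refl_d d \<alpha> y) C)))"
  proof (intro sum.cong refl)
    fix \<alpha> assume a: "\<alpha> \<in> Rp"
    have ia: "inner_d d \<alpha> \<alpha> \<noteq> 0" using ia_pos[OF a] by simp
    show "complex_of_real (\<kappa> \<alpha>) * vm \<alpha> (vm y (Q \<alpha> y)) C = - (complex_of_real (\<kappa> \<alpha>) * vm y (vm \<alpha> (Q \<alpha> y)) C)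
        - 2 * (complex_of_real (\<kappa> \<alpha>) * (P y C - P (refl_d d \<alpha> y) C))"
      unfolding vm_anti[OF supp_Q, where u=\<alpha> and v=y] P_refl_diff[OF ia]
      by (simp add: algebra_simps inner_comm[of d \<alpha> y])
  qed
  also have "\<dots> = - (\<Sum>\<alpha>\<in>Rp. complex_of_real (\<kappa> \<alpha>) * vm y (vm \<alpha> (Q \<alpha> y)) C)
        - 2 * (\<Sum>\<alpha>\<in>Rp. complex_of_real (\<kappa> \<alpha>) * (P y C - P (refl_d d \<alpha> y) C))"
    by (simp add: sum_subtractf sum_negf sum_distrib_left)
  also have "(\<Sum>\<alpha>\<in>Rp. complex_of_real (\<kappa> \<alpha>) * vm y (vm \<alpha> (Q \<alpha> y)) C)
      = vm y (\<lambda>B. \<Sum>\<alpha>\<in>Rp. complex_of_real (\<kappa> \<alpha>) * vm \<alpha> (Q \<alpha> y) B) C"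
    by (simp add: cl_mult_sum2 cl_mult_scale2)
  finally show ?thesis .
qed

lemma S5: "(\<Sum>\<alpha>\<in>Rp. complex_of_real (\<kappa> \<alpha> * (2 / inner_d d \<alpha> \<alpha>)) * vm \<alpha> (vm \<alpha> (P (refl_d d \<alpha> y))) C)
   = - 2 * (\<Sum>\<alpha>\<in>Rp. complex_of_real (\<kappa> \<alpha>) * P (refl_d d \<alpha> y) C)"
  unfolding sum_distrib_left
proof (intro sum.cong refl)
  fix \<alpha> assume a: "\<alpha> \<in> Rp"
  have ia: "inner_d d \<alpha> \<alpha> \<noteq> 0" using ia_pos[OF a] by simp
  show "complex_of_real (\<kappa> \<alpha> * (2 / inner_d d \<alpha> \<alpha>)) * vm \<alpha> (vm \<alpha> (P (refl_d d \<alpha> y))) C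
     = - 2 * (complex_of_real (\<kappa> \<alpha>) * P (refl_d d \<alpha> y) C)"
    unfolding vm_vm[OF supp_P] normsq_d_def using ia by (simp add: field_simps)
qed

end


context setting
begin

lemma DD_F2: "dunkl_dirac d Rp \<kappa> (F2 p) y C
   = - complex_of_real (2 * poly (pderiv p) (rr y) * rr y + poly p (rr y) * (real d + 2 * real n + 2 * gam)) * P y C"
proof -
  define a where "a = poly (pderiv p) (rr y)"
  define pr where "pr = complex_of_real (poly p (rr y))"
  define w where "w \<alpha> = 2 / inner_d d \<alpha> \<alpha>" for \<alpha>
  define Ps where "Ps \<alpha> = P (refl_d d \<alpha> y)" for \<alpha>
  have "dunkl_dirac d Rp \<kappa> (F2 p) y C = (\<Sum>i<d. complex_of_real (a * (2 * y i)) * E d i (vm y (P y)) C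
     + pr * (E d i (E d i (P y)) C + E d i (vm y (DPi y i)) C
     + ((\<Sum>\<alpha>\<in>Rp. complex_of_real (\<kappa> \<alpha> * \<alpha> i) * E d i (vm y (Q \<alpha> y)) C)
     + (\<Sum>\<alpha>\<in>Rp. complex_of_real ((\<kappa> \<alpha> * w \<alpha>) * \<alpha> i) * E d i (vm \<alpha> (Ps \<alpha>)) C))))"
    unfolding dunkl_dirac_def
  proof (intro sum.cong refl)
    fix i assume "i \<in> {..<d}" hence i: "i < d" by simp
    show "E d i (dunkl d Rp \<kappa> i (F2 p) y) C = complex_of_real (a * (2 * y i)) * E d i (vm y (P y)) C
     + pr * (E d i (E d i (P y)) C + E d i (vm y (DPi y i)) C
     + ((\<Sum>\<alpha>\<in>Rp. complex_of_real (\<kappa> \<alpha> * \<alpha> i) * E d i (vm y (Q \<alpha> y)) C)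
     + (\<Sum>\<alpha>\<in>Rp. complex_of_real ((\<kappa> \<alpha> * w \<alpha>) * \<alpha> i) * E d i (vm \<alpha> (Ps \<alpha>)) C)))"
      unfolding dunkl_F2[OF i] a_def[symmetric] pr_def[symmetric] w_def[symmetric] Ps_def[symmetric]
      by (simp only: cl_mult_add2 cl_mult_scale2 cl_mult_sum2 distrib_left sum.distrib)
        (simp add: mult_ac)
  qed
  also have "\<dots> = (\<Sum>i<d. complex_of_real (a * (2 * y i)) * E d i (vm y (P y)) C)
     + pr * ((\<Sum>i<d. E d i (E d i (P y)) C) + (\<Sum>i<d. E d i (vm y (DPi y i)) C)
     + ((\<Sum>i<d. \<Sum>\<alpha>\<in>Rp. complex_of_real (\<kappa> \<alpha> * \<alpha> i) * E d i (vm y (Q \<alpha> y)) C)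
     + (\<Sum>i<d. \<Sum>\<alpha>\<in>Rp. complex_of_real ((\<kappa> \<alpha> * w \<alpha>) * \<alpha> i) * E d i (vm \<alpha> (Ps \<alpha>)) C)))"
    by (simp only: sum.distrib sum_distrib_left distrib_left)
  also have "\<dots> = - complex_of_real (2 * a * rr y) * P y C
     + pr * (- of_nat d * P y C + (- vm y (\<lambda>B. \<Sum>i<d. E d i (DPi y i) B) C - 2 * of_nat n * P y C)
     + ((- vm y (\<lambda>B. \<Sum>\<alpha>\<in>Rp. complex_of_real (\<kappa> \<alpha>) * vm \<alpha> (Q \<alpha> y) B) C
     - 2 * (\<Sum>\<alpha>\<in>Rp. complex_of_real (\<kappa> \<alpha>) * (P y C - Ps \<alpha> C)))
     + (- 2 * (\<Sum>\<alpha>\<in>Rp. complex_of_real (\<kappa> \<alpha>) * Ps \<alpha> C))))"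
    unfolding S1 S2 S3 swap_vm S4 Ps_def w_def S5 by (rule refl)
  finally have h1: "dunkl_dirac d Rp \<kappa> (F2 p) y C = - complex_of_real (2 * a * rr y) * P y C
     + pr * (- of_nat d * P y C + (- vm y (\<lambda>B. \<Sum>i<d. E d i (DPi y i) B) C - 2 * of_nat n * P y C)
     + ((- vm y (\<lambda>B. \<Sum>\<alpha>\<in>Rp. complex_of_real (\<kappa> \<alpha>) * vm \<alpha> (Q \<alpha> y) B) C
     - 2 * (\<Sum>\<alpha>\<in>Rp. complex_of_real (\<kappa> \<alpha>) * (P y C - Ps \<alpha> C)))
     + (- 2 * (\<Sum>\<alpha>\<in>Rp. complex_of_real (\<kappa> \<alpha>) * Ps \<alpha> C))))" .
  have h2: "vm y (\<lambda>B. \<Sum>i<d. E d i (DPi y i) B) C + vm y (\<lambda>B. \<Sum>\<alpha>\<in>Rp. complex_of_real (\<kappa> \<alpha>) * vm \<alpha> (Q \<alpha> y) B) C = 0"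
    unfolding cl_mult_add2[symmetric] harm_split cl_mult_zero2 ..
  have h3: "(\<Sum>\<alpha>\<in>Rp. complex_of_real (\<kappa> \<alpha>) * (P y C - Ps \<alpha> C))
      = complex_of_real gam * P y C - (\<Sum>\<alpha>\<in>Rp. complex_of_real (\<kappa> \<alpha>) * Ps \<alpha> C)"
    by (simp add: right_diff_distrib sum_subtractf sum_distrib_right)
  have "dunkl_dirac d Rp \<kappa> (F2 p) y C = - (2 * complex_of_real a * complex_of_real (rr y)
      + pr * (of_nat d + 2 * of_nat n + 2 * complex_of_real gam)) * P y C"
  proof -
    define X where "X = dunkl_dirac d Rp \<kappa> (F2 p) y C"
    define V1 where "V1 = vm y (\<lambda>B. \<Sum>i<d. E d i (DPi y i) B) C"
    define V2 where "V2 = vm y (\<lambda>B. \<Sum>\<alpha>\<in>Rp. complex_of_real (\<kappa> \<alpha>) * vm \<alpha> (Q \<alpha> y) B) C"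
    define T where "T = (\<Sum>\<alpha>\<in>Rp. complex_of_real (\<kappa> \<alpha>) * (P y C - Ps \<alpha> C))"
    define S where "S = (\<Sum>\<alpha>\<in>Rp. complex_of_real (\<kappa> \<alpha>) * Ps \<alpha> C)"
    define g where "g = complex_of_real gam"
    define PP where "PP = P y C"
    have e1: "X = - complex_of_real (2 * a * rr y) * PP + pr * (- of_nat d * PP + (- V1 - 2 * of_nat n * PP)
       + ((- V2 - 2 * T) + (- 2 * S)))"
      using h1 unfolding X_def V1_def V2_def T_def S_def PP_def .
    have e2: "V1 + V2 = 0" using h2 unfolding V1_def V2_def .
    have e3: "T = g * PP - S" using h3 unfolding T_def g_def S_def PP_def .
    have "X = - (2 * complex_of_real a * complex_of_real (rr y) + pr * (of_nat d + 2 * of_nat n + 2 * g)) * PP"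
      using e1 e2 e3 by (simp add: algebra_simps) algebra?
    thus ?thesis unfolding X_def g_def PP_def .
  qed
  thus ?thesis unfolding pr_def a_def by simp
qed

end


context setting
begin

lemma Dplus_F2: "D_plus d Rp \<kappa> (F2 p) = F1 (smult 2 (pCons 0 p) - smult 2 (pCons 0 (pderiv p))
     - smult (real d + 2 * real n + 2 * gam) p)"
proof (intro ext)
  fix y C
  have "vm y (F2 p y) C = complex_of_real (poly p (rr y)) * vm y (vm y (P y)) C"
    unfolding F2_def cl_scale_def by (rule cl_mult_scale2)
  also have "\<dots> = - complex_of_real (poly p (rr y) * rr y) * P y C"
    using vm_vm[OF supp_P] by simp
  finally have h: "vm y (F2 p y) C = - complex_of_real (poly p (rr y) * rr y) * P y C" .
  show "D_plus d Rp \<kappa> (F2 p) y C = F1 (smult 2 (pCons 0 p) - smult 2 (pCons 0 (pderiv p))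
     - smult (real d + 2 * real n + 2 * gam) p) y C"
    unfolding D_plus_def F1_def cl_scale_def h DD_F2
    by (simp add: algebra_simps)
qed

end


lemma Gp1: "(z::real) > 0 \<Longrightarrow> Gamma (z + 1) = z * Gamma z"
  by (rule Gamma_plus1) (auto elim!: nonpos_Ints_cases)

definition gl :: "real \<Rightarrow> nat \<Rightarrow> nat \<Rightarrow> real" where
  "gl a k j = Gamma (real k + a + 1) / (fact j * fact (k - j) * Gamma (real j + a + 1))"

lemma I1:
  assumes b: "b > 0" and jk: "j < k"
  shows "gl b k j = real (Suc j) * gl (b - 1) k (Suc j) + gl (b - 1) k j"
proof -
  define u where "u = (fact j :: real)"
  define v where "v = (fact (k - Suc j) :: real)"
  define G1 where "G1 = Gamma (real j + b)"
  define G2 where "G2 = Gamma (real k + b)"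
  have u: "u > 0" "fact (Suc j) = real (Suc j) * u" unfolding u_def by auto
  have v: "v > 0" "(fact (k - j) :: real) = real (k - j) * v"
    unfolding v_def using jk by (auto simp: fact_reduce[of "k - j"] Suc_diff_Suc)
  have G1: "G1 > 0" "Gamma (real j + b + 1) = (real j + b) * G1"
    unfolding G1_def using b by (auto intro!: Gp1)
  have G2: "G2 > 0" "Gamma (real k + b + 1) = (real k + b) * G2"
    unfolding G2_def using b by (auto intro!: Gp1)
  have kj: "real (k - j) = real k - real j" "real (k - Suc j) = real k - real j - 1" using jk by auto
  have e1: "gl b k j = (real k + b) * G2 / (u * (real (k - j) * v) * ((real j + b) * G1))"
    unfolding gl_def u_def[symmetric] v(2) G1(2)[symmetric] G2(2)[symmetric] by simp
  have e2: "gl (b - 1) k (Suc j) = G2 / (real (Suc j) * u * v * ((real j + b) * G1))"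
    unfolding gl_def u(2)[symmetric] v_def[symmetric] G2_def G1(2)[symmetric]
    by (simp add: algebra_simps)
  have e3: "gl (b - 1) k j = G2 / (u * (real (k - j) * v) * G1)"
    unfolding gl_def u_def[symmetric] v(2)[symmetric] G1_def G2_def by (simp add: algebra_simps)
  have pos: "real j + b > 0" "real (k - j) > 0" using b jk by auto
  define W where "W = G2 / (u * v * G1)"
  define t where "t = real (k - j)"
  define s where "s = real j + b"
  have ts: "t + s = real k + b" unfolding t_def s_def using kj by simp
  have nz: "u \<noteq> 0" "v \<noteq> 0" "G1 \<noteq> 0" "t \<noteq> 0" "s \<noteq> 0" "real (Suc j) \<noteq> 0"
    using u v G1 pos unfolding t_def s_def by auto
  have f1: "gl b k j = W * (t + s) / (t * s)" unfolding e1 W_def ts t_def[symmetric] s_def[symmetric]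
    using nz by (simp add: field_simps)
  have f2: "real (Suc j) * gl (b - 1) k (Suc j) = W / s" unfolding e2 W_def s_def[symmetric]
    using nz by (simp only: field_simps) simp
  have f3: "gl (b - 1) k j = W / t" unfolding e3 W_def t_def[symmetric]
    using nz by (simp add: field_simps)
  show ?thesis unfolding f1 f2 f3 using nz by (simp add: field_simps)
qed

lemma gl_diag: "real k + a + 1 > 0 \<Longrightarrow> gl a k k = 1 / fact k"
proof -
  assume h: "real k + a + 1 > 0"
  have "Gamma (real k + a + 1) \<noteq> 0" using Gamma_real_pos[OF h] by linarith
  thus ?thesis unfolding gl_def by simp
qed

lemma I1k: "b > 0 \<Longrightarrow> gl b k k = gl (b - 1) k k"
  by (simp add: gl_diag)

lemma I2_0:
  assumes b: "b > 0"
  shows "real (Suc k) * gl (b - 1) (Suc k) 0 = (0 + b) * gl b k 0"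
proof -
  define G where "G = Gamma (real k + b + 1)"
  define H where "H = Gamma b"
  have H: "H > 0" "Gamma (b + 1) = b * H" unfolding H_def using b by (auto intro!: Gp1)
  have "real (Suc k) * gl (b - 1) (Suc k) 0 = real (Suc k) * G / (fact (Suc k) * H)"
    unfolding gl_def G_def H_def by (simp add: algebra_simps)
  also have "\<dots> = G / (fact k * H)"
  proof -
    have "(fact (Suc k) :: real) = real (Suc k) * fact k" by simp
    moreover have "(fact k :: real) \<noteq> 0" "real (Suc k) \<noteq> 0" "H \<noteq> 0" using H by auto
    ultimately show ?thesis by (simp only: field_simps) simp
  qed
  also have "\<dots> = (0 + b) * gl b k 0"
    unfolding gl_def G_def[symmetric] using H b by (simp add: add.commute field_simps)
  finally show ?thesis .
qed

lemma I2_mid: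
  assumes b: "b > 0" and ik: "i < k"
  shows "real (Suc k) * gl (b - 1) (Suc k) (Suc i) = gl b k i + (real (Suc i) + b) * gl b k (Suc i)"
proof -
  define G where "G = Gamma (real k + b + 1)"
  define H where "H = Gamma (real i + b + 1)"
  define u where "u = (fact i :: real)"
  define v where "v = (fact (k - Suc i) :: real)"
  have u: "u > 0" "fact (Suc i) = real (Suc i) * u" unfolding u_def by auto
  have v: "v > 0" "(fact (k - i) :: real) = real (k - i) * v"
    unfolding v_def using ik by (auto simp: fact_reduce[of "k - i"] Suc_diff_Suc)
  have H: "H > 0" "Gamma (real (Suc i) + b + 1) = (real (Suc i) + b) * H"
  proof -
    have "real (Suc i) + b = real i + b + 1" by simp
    thus "H > 0" "Gamma (real (Suc i) + b + 1) = (real (Suc i) + b) * H"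
      unfolding H_def using b Gp1[of "real i + b + 1"] by auto
  qed
  have e1: "gl (b - 1) (Suc k) (Suc i) = G / (real (Suc i) * u * (real (k - i) * v) * H)"
    unfolding gl_def u(2)[symmetric] v(2)[symmetric] G_def H_def by (simp add: algebra_simps)
  have e2: "gl b k i = G / (u * (real (k - i) * v) * H)"
    unfolding gl_def u_def[symmetric] v(2)[symmetric] G_def H_def by simp
  have e3: "gl b k (Suc i) = G / (real (Suc i) * u * v * ((real (Suc i) + b) * H))"
    unfolding gl_def u(2)[symmetric] v_def[symmetric] G_def H(2)[symmetric] by (simp add: Suc_diff_Suc)
  define W where "W = G / (u * v * H)"
  define t where "t = real (k - i)"
  define s where "s = real (Suc i)"
  have ts: "t + s = real (Suc k)" unfolding t_def s_def using ik by simp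
  have nz: "u \<noteq> 0" "v \<noteq> 0" "H \<noteq> 0" "t \<noteq> 0" "s \<noteq> 0" "real (Suc i) + b \<noteq> 0"
    using u v H ik b unfolding t_def s_def by auto
  have f1: "real (Suc k) * gl (b - 1) (Suc k) (Suc i) = W * (t + s) / (s * t)"
    unfolding e1 W_def ts[symmetric] t_def[symmetric] s_def[symmetric] using nz by (simp add: field_simps)
  have f2: "gl b k i = W / t" unfolding e2 W_def t_def[symmetric] using nz by (simp add: field_simps)
  have f3: "(real (Suc i) + b) * gl b k (Suc i) = W / s" unfolding e3 W_def s_def[symmetric]
    using nz by (simp only: field_simps s_def) simp
  show ?thesis unfolding f1 f2 f3 using nz by (simp add: field_simps)
qed

lemma I2_top:
  assumes b: "b > 0"
  shows "real (Suc k) * gl (b - 1) (Suc k) (Suc k) = gl b k k"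
proof -
  have "(fact (Suc k) :: real) = real (Suc k) * fact k" by simp
  moreover have "(fact k :: real) \<noteq> 0" "real (Suc k) \<noteq> 0" by auto
  ultimately show ?thesis using b by (simp add: gl_diag)
qed


definition Lpol :: "real \<Rightarrow> nat \<Rightarrow> real poly" where
  "Lpol a k = (\<Sum>j\<le>k. monom ((-1) ^ j * gl a k j) j)"

lemma coeff_Lp: "coeff (Lpol a k) j = (if j \<le> k then (-1) ^ j * gl a k j else 0)"
  unfolding Lpol_def coeff_sum by (simp add: sum.delta)

lemma poly_Lp: "poly (Lpol a k) y = laguerre a k y"
  unfolding Lpol_def laguerre_def gl_def poly_sum poly_monom
  by (intro sum.cong refl) (simp add: power_minus[of y])

lemma PI1:
  assumes b: "b > 0"
  shows "Lpol b k = Lpol (b - 1) k - pderiv (Lpol (b - 1) k)"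
proof (rule poly_eqI)
  fix j
  show "coeff (Lpol b k) j = coeff (Lpol (b - 1) k - pderiv (Lpol (b - 1) k)) j"
  proof (cases "j < k")
    case True
    thus ?thesis using I1[OF b True] by (simp add: coeff_Lp coeff_pderiv algebra_simps)
  next
    case False
    show ?thesis
    proof (cases "j = k")
      case True thus ?thesis using I1k[OF b] by (simp add: coeff_Lp coeff_pderiv)
    next
      case False thus ?thesis using \<open>\<not> j < k\<close> by (simp add: coeff_Lp coeff_pderiv)
    qed
  qed
qed

lemma PI2:
  assumes b: "b > 0"
  shows "smult (real (Suc k)) (Lpol (b - 1) (Suc k))
     = pCons 0 (pderiv (Lpol b k)) - pCons 0 (Lpol b k) + smult b (Lpol b k)"
proof (rule poly_eqI)
  fix j
  show "coeff (smult (real (Suc k)) (Lpol (b - 1) (Suc k))) j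
     = coeff (pCons 0 (pderiv (Lpol b k)) - pCons 0 (Lpol b k) + smult b (Lpol b k)) j"
  proof (cases j)
    case 0 thus ?thesis using I2_0[OF b, of k] by (simp add: coeff_Lp)
  next
    case (Suc i)
    consider "i < k" | "i = k" | "i > k" by linarith
    thus ?thesis
    proof cases
      case 1 thus ?thesis using Suc arg_cong[OF I2_mid[OF b 1], of "\<lambda>x. (-1) ^ Suc i * x"]
        by (simp add: coeff_Lp coeff_pderiv algebra_simps)
    next
      case 2 thus ?thesis using Suc I2_top[OF b, of k] by (simp add: coeff_Lp coeff_pderiv)
    next
      case 3 thus ?thesis using Suc by (simp add: coeff_Lp coeff_pderiv)
    qed
  qed
qed

definition Ak :: "real \<Rightarrow> nat \<Rightarrow> real poly" where
  "Ak b k = smult (2 ^ (2 * k) * fact k) (Lpol (b - 1) k)"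
definition Bk :: "real \<Rightarrow> nat \<Rightarrow> real poly" where
  "Bk b k = smult (- (2 ^ (2 * k + 1) * fact k)) (Lpol b k)"

lemma Rec1: "b > 0 \<Longrightarrow> smult 2 (pderiv (Ak b k)) - smult 2 (Ak b k) = Bk b k"
  unfolding Ak_def Bk_def PI1[of b k] by (simp add: pderiv_smult algebra_simps smult_diff_right)

lemma Rec2: "b > 0 \<Longrightarrow> smult 2 (pCons 0 (Bk b k)) - smult 2 (pCons 0 (pderiv (Bk b k)))
    - smult (2 * b) (Bk b k) = Ak b (Suc k)"
proof -
  assume b: "b > 0"
  have "Ak b (Suc k) = smult (2 ^ (2 * k + 2) * fact k) (smult (real (Suc k)) (Lpol (b - 1) (Suc k)))"
    unfolding Ak_def by (simp add: mult_ac)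
  also have "\<dots> = smult (2 ^ (2 * k + 2) * fact k) (pCons 0 (pderiv (Lpol b k)) - pCons 0 (Lpol b k) + smult b (Lpol b k))"
    unfolding PI2[OF b] ..
  finally show ?thesis unfolding Bk_def
    by (simp add: pderiv_smult pderiv_minus smult_diff_right smult_add_right algebra_simps)
qed


context setting
begin

lemma F1_one: "F1 1 = P"
  unfolding F1_def cl_scale_def by simp

lemma H_main:
  assumes b: "b > 0" and bd: "real d + 2 * real n + 2 * gam = 2 * b"
  shows "H_fun d Rp \<kappa> (2 * k) P = F1 (Ak b k) \<and> H_fun d Rp \<kappa> (Suc (2 * k)) P = F2 (Bk b k)"
proof (induction k)
  case 0
  have "Lpol (b - 1) 0 = 1" unfolding Lpol_def using b by (simp add: gl_diag one_pCons)
  hence e: "Ak b 0 = 1" unfolding Ak_def by simp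
  have h0: "H_fun d Rp \<kappa> (2 * 0) P = F1 (Ak b 0)" unfolding H_fun_def e F1_one by simp
  moreover have "H_fun d Rp \<kappa> (Suc (2 * 0)) P = F2 (Bk b 0)"
    using h0 unfolding H_fun_def by (simp add: Dplus_F1 Rec1[OF b])
  ultimately show ?case by simp
next
  case (Suc k)
  have e1: "H_fun d Rp \<kappa> (2 * Suc k) P = F1 (Ak b (Suc k))"
  proof -
    have "H_fun d Rp \<kappa> (2 * Suc k) P = D_plus d Rp \<kappa> (H_fun d Rp \<kappa> (Suc (2 * k)) P)"
      unfolding H_fun_def by simp
    also have "\<dots> = D_plus d Rp \<kappa> (F2 (Bk b k))" using Suc.IH by simp
    also have "\<dots> = F1 (Ak b (Suc k))"
      unfolding Dplus_F2 bd Rec2[OF b, symmetric] ..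
    finally show ?thesis .
  qed
  moreover have "H_fun d Rp \<kappa> (Suc (2 * Suc k)) P = F2 (Bk b (Suc k))"
  proof -
    have "H_fun d Rp \<kappa> (Suc (2 * Suc k)) P = D_plus d Rp \<kappa> (H_fun d Rp \<kappa> (2 * Suc k) P)"
      unfolding H_fun_def by simp
    also have "\<dots> = F2 (Bk b (Suc k))" unfolding e1 Dplus_F1 Rec1[OF b] ..
    finally show ?thesis .
  qed
  ultimately show ?case ..
qed

end

lemma partial_P_gen: "i < d \<Longrightarrow> partial_d i (Pc d n c) y = DP d n c y i"
  unfolding partial_d_def by (intro ext vector_derivative_at deriv_P)

lemma dq_P_gen:
  assumes "\<forall>i\<ge>d. \<alpha> i = 0" "\<alpha> \<noteq> (\<lambda>_. 0)"
  shows "diff_quot d (Pc d n c) \<alpha> y = QP d n c \<alpha> y"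
proof (rule diff_quot_eq[OF assms])
  have "inner_d d \<alpha> \<alpha> > 0" using inner_pos[OF assms] .
  thus "Pc d n c z A - Pc d n c (refl_d d \<alpha> z) A = complex_of_real (inner_d d \<alpha> z) * QP d n c \<alpha> z A" for z A
    by (intro P_refl_diff) simp
  show "continuous_on UNIV (\<lambda>z. QP d n c \<alpha> z A)" for A by (rule cont_QP)
qed

lemma DD_proj:
  assumes "\<forall>\<alpha>\<in>Rp. (\<forall>i\<ge>d. \<alpha> i = 0) \<and> \<alpha> \<noteq> (\<lambda>_. 0)"
  shows "dunkl_dirac d Rp \<kappa> (Pc d n c) (projd d y) = dunkl_dirac d Rp \<kappa> (Pc d n c) y"
proof -
  have "dunkl d Rp \<kappa> i (Pc d n c) (projd d y) = dunkl d Rp \<kappa> i (Pc d n c) y" if "i < d" for i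
    unfolding dunkl_def partial_P_gen[OF that]
    using assms by (simp add: DP_proj[OF that] dq_P_gen QP_proj cong: sum.cong)
  thus ?thesis unfolding dunkl_dirac_def by (intro ext sum.cong refl) auto
qed

lemma proj_id: "\<forall>i\<ge>d. y i = 0 \<Longrightarrow> projd d y = y"
  unfolding projd_def by auto

theorem theorem3p3:
  fixes d n s :: nat and R Rp :: "vec set" and \<kappa> :: "vec \<Rightarrow> real"
    and P :: "vec \<Rightarrow> cl" and x :: vec
  assumes "d \<ge> 2"
    and "root_system d R"
    and "positive_subsystem d R Rp"
    and "multiplicity d R \<kappa>"
    and "(\<Sum>\<alpha>\<in>Rp. \<kappa> \<alpha>) > 0"
    and "monogenic d Rp \<kappa> n P"
    and "\<forall>i\<ge>d. x i = 0"
  shows "(even s \<longrightarrow> H_fun d Rp \<kappa> s P x =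
            cl_scale (2 ^ s * fact (s div 2)
              * laguerre ((2 * (\<Sum>\<alpha>\<in>Rp. \<kappa> \<alpha>) + real d) / 2 + real n - 1) (s div 2) (normsq_d d x))
              (P x))
       \<and> (odd s \<longrightarrow> H_fun d Rp \<kappa> s P x =
            cl_scale (- (2 ^ s * fact ((s - 1) div 2)
              * laguerre ((2 * (\<Sum>\<alpha>\<in>Rp. \<kappa> \<alpha>) + real d) / 2 + real n) ((s - 1) div 2) (normsq_d d x)))
              (cl_mult d (cl_vec d x) (P x)))"
proof -
  have RpR: "Rp \<subseteq> R" using assms(3) unfolding positive_subsystem_def by auto
  have fR: "finite R" using assms(2) unfolding root_system_def by (rule conjunct1)
  have okR: "\<forall>\<alpha>\<in>R. (\<forall>i\<ge>d. \<alpha> i = 0) \<and> \<alpha> \<noteq> (\<lambda>_. 0)"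
    using assms(2) unfolding root_system_def by (rule conjunct1[OF conjunct2])
  have Rfin: "finite Rp" using fR RpR by (rule finite_subset[rotated])
  have Rok: "\<forall>\<alpha>\<in>Rp. (\<forall>i\<ge>d. \<alpha> i = 0) \<and> \<alpha> \<noteq> (\<lambda>_. 0)"
    using okR RpR by (simp add: subset_iff)
  have hp: "hom_poly d n P" using assms(6) unfolding monogenic_def by (rule conjunct1)
  have mz: "\<forall>x. (\<forall>i\<ge>d. x i = 0) \<longrightarrow> dunkl_dirac d Rp \<kappa> P x = (\<lambda>_. 0)"
    using assms(6) unfolding monogenic_def by (rule conjunct2)
  obtain c where csupp: "\<forall>\<beta> A. \<not> A \<subseteq> {..<d} \<longrightarrow> c \<beta> A = 0" and Pc: "P = Pc d n c"
    using hom_poly_Pc[OF hp] by (elim exE conjE)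
  have harm: "\<forall>y. dunkl_dirac d Rp \<kappa> (Pc d n c) y = (\<lambda>_. 0)"
  proof
    fix y
    have "\<forall>i\<ge>d. projd d y i = 0" unfolding projd_def by simp
    hence "dunkl_dirac d Rp \<kappa> (Pc d n c) (projd d y) = (\<lambda>_. 0)"
      using mz unfolding Pc by simp
    thus "dunkl_dirac d Rp \<kappa> (Pc d n c) y = (\<lambda>_. 0)" using DD_proj[OF Rok] by simp
  qed
  interpret setting d n c Rp \<kappa>
    using csupp Rok Rfin harm by unfold_locales
  define b where "b = (2 * (\<Sum>\<alpha>\<in>Rp. \<kappa> \<alpha>) + real d) / 2 + real n"
  have "real d \<ge> 2" using assms(1) by simp
  hence "(2 * (\<Sum>\<alpha>\<in>Rp. \<kappa> \<alpha>) + real d) / 2 > 0" using assms(5) by simp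
  hence b: "b > 0" unfolding b_def by (simp add: add_pos_nonneg)
  have bd: "real d + 2 * real n + 2 * gam = 2 * b" unfolding b_def by simp
  show ?thesis
  proof (intro conjI impI)
    assume "even s"
    then obtain k where k: "s = 2 * k" by blast
    have "H_fun d Rp \<kappa> s P x = F1 (Ak b k) x" using H_main[OF b bd, of k] k Pc by simp
    thus "H_fun d Rp \<kappa> s P x = cl_scale (2 ^ s * fact (s div 2)
              * laguerre ((2 * (\<Sum>\<alpha>\<in>Rp. \<kappa> \<alpha>) + real d) / 2 + real n - 1) (s div 2) (normsq_d d x)) (P x)"
      unfolding F1_def Ak_def k b_def Pc by (simp add: poly_Lp)
  next
    assume "odd s"
    then obtain k where k0: "s = 2 * k + 1" by (rule oddE)
    hence k: "s = Suc (2 * k)" by simp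
    have "H_fun d Rp \<kappa> s P x = F2 (Bk b k) x" using H_main[OF b bd, of k] k Pc by simp
    thus "H_fun d Rp \<kappa> s P x = cl_scale (- (2 ^ s * fact ((s - 1) div 2)
              * laguerre ((2 * (\<Sum>\<alpha>\<in>Rp. \<kappa> \<alpha>) + real d) / 2 + real n) ((s - 1) div 2) (normsq_d d x)))
              (cl_mult d (cl_vec d x) (P x))"
      unfolding F2_def Bk_def k b_def Pc by (simp add: poly_Lp)
  qed
qed


end
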